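(* For every $n\ge 1$, $$R_n(x,y,z,t) = \sum_{T \in \mathcal{G}_{n+1}} y^{\mathrm{unl}(T)}\, t^{\mathrm{impp}(T)}\, x^{\deg_T(1)-1}\, z^{\mathrm{lead}(T)-\deg_T(1)-1}.$$
   Context: Polynomials $Q_n(x,y,z,t)$ are defined by $Q_1=1$ and $Q_{n+1} = \left[x+nz+(y+t)\left(n+y\,\partial_y\right)\right]Q_n$, and $R_n(x,y,z,t) := Q_n(x,y+1,z,t-1)$. A Greg tree of size $m$ is a tree in which exactly $m$ vertices carry labels, bijectively from $[m]$, and every unlabelled vertex has degree at least $3$; $\mathcal{G}_m$ is the set of Greg trees of size $m$ rooted at the vertex labelled $1$. Edges $(i,j)$ are oriented from parent $i$ to child $j$; $\lambda_T$ denotes the label of a labelled vertex. For any vertex $v$, $\beta_T(v)$ is the smallest label among the labelled descendants of $v$ ($v$ itself included). An edge $(i,j)$ is improper if $i$ is labelled and $\lambda_T(i)>\beta_T(j)$, proper otherwise. A vertex is an improper parent if it has at least one improper child (equivalently it is labelled and $\beta_T(i)\ne\lambda_T(i)$). Statistics: $\mathrm{unl}(T)$ = number of unlabelled vertices; $\mathrm{impp}(T)$ = number of improper parents; $\deg_T(1)$ = degree of the root $1$. For a labelled vertex $i$ with root-to-$i$ path $L(i)=(1=a_0,\dots,a_k=i)$, its greater ancestors path is the longest suffix $(a_p,\dots,a_k)$ of $L(i)$ such that every labelled vertex $j$ on it has $\lambda_T(j)\ge\lambda_T(i)$; $i$ is a leading vertex if $\beta_T(a_p)=\lambda_T(i)$;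 $\mathrm{lead}(T)$ is the number of leading vertices. *)

theory Defs
  imports "HOL-Analysis.Analysis" "HOL-Library.Multiset"
begin

text \<open>Q n x y z t is Q_n(x,y,z,t) for n \<ge> 1; the value at n = 0 is an unused dummy.
  Recurrence: Q_{m+1} = (x + m z + (y+t)(m + y d/dy)) Q_m.\<close>
fun Q :: "nat \<Rightarrow> real \<Rightarrow> real \<Rightarrow> real \<Rightarrow> real \<Rightarrow> real" where
  "Q 0 x y z t = 0"
| "Q (Suc 0) x y z t = 1"
| "Q (Suc (Suc m)) x y z t =
     (x + real (Suc m) * z + (y + t) * real (Suc m)) * Q (Suc m) x y z t
     + (y + t) * (y * deriv (\<lambda>w. Q (Suc m) x w z t) y)"

definition R :: "nat \<Rightarrow> real \<Rightarrow> real \<Rightarrow> real \<Rightarrow> real \<Rightarrow> real" where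
  "R n x y z t = Q n x (y + 1) z (t - 1)"

text \<open>A vertex carries a label (Some a) or is unlabelled (None); its children form a
  multiset of subtrees, so a value of this type is a rooted tree up to
  label-preserving isomorphism.\<close>
datatype tree = Nd (lab: "nat option") (kids: "tree multiset")

primrec labs :: "tree \<Rightarrow> nat multiset" where
  "labs (Nd l cs) = (case l of None \<Rightarrow> {#} | Some a \<Rightarrow> {#a#}) + sum_mset (image_mset labs cs)"

primrec nodes :: "tree \<Rightarrow> tree multiset" where
  "nodes (Nd l cs) = {#Nd l cs#} + sum_mset (image_mset nodes cs)"

text \<open>For every vertex, its root-to-vertex path (list of subtrees rooted at the path vertices).\<close>
primrec pnodes :: "tree \<Rightarrow> tree list multiset" where
  "pnodes (Nd l cs) = {#[Nd l cs]#}
     + sum_mset (image_mset (\<lambda>c. image_mset (\<lambda>p. Nd l cs # p) (pnodes c)) cs)"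

definition beta :: "tree \<Rightarrow> nat" where
  "beta s = Min (set_mset (labs s))"

text \<open>Greg trees of size m rooted at the vertex labelled 1: labels are a bijection onto
  {1..m}, and every unlabelled vertex (necessarily a non-root vertex, since the root is
  labelled 1) has degree \<ge> 3, i.e. at least 2 children.\<close>
definition greg :: "nat \<Rightarrow> tree \<Rightarrow> bool" where
  "greg m T \<longleftrightarrow> lab T = Some 1 \<and> labs T = mset_set {1..m}
     \<and> (\<forall>s\<in>#nodes T. lab s = None \<longrightarrow> size (kids s) \<ge> 2)"

definition unl :: "tree \<Rightarrow> nat" where
  "unl T = size {# s \<in># nodes T. lab s = None #}"

definition impp :: "tree \<Rightarrow> nat" where
  "impp T = size {# s \<in># nodes T. lab s \<noteq> None \<and> beta s \<noteq> the (lab s) #}"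

text \<open>Degree of the root (the root has no parent).\<close>
definition deg_root :: "tree \<Rightarrow> nat" where
  "deg_root T = size (kids T)"

text \<open>For a path p = (a_0,...,a_k) ending in a labelled vertex i, the greater ancestors
  path is the longest suffix all of whose labelled vertices have label \<ge> label(i);
  i is leading iff beta of its first vertex a_p equals label(i).\<close>
definition gap_top :: "tree list \<Rightarrow> tree" where
  "gap_top p = last (takeWhile
      (\<lambda>s. case lab s of None \<Rightarrow> True | Some j \<Rightarrow> the (lab (last p)) \<le> j) (rev p))"

definition leading :: "tree list \<Rightarrow> bool" where
  "leading p \<longleftrightarrow> lab (last p) \<noteq> None \<and> beta (gap_top p) = the (lab (last p))"

definition lead :: "tree \<Rightarrow> nat" where
  "lead T = size {# p \<in># pnodes T. leading p #}"

end

theory Submission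
  imports Defs "HOL-Computational_Algebra.Polynomial"
begin


definition cnd :: "nat \<Rightarrow> tree \<Rightarrow> bool" where
  "cnd b g = (case lab g of None \<Rightarrow> True | Some j \<Rightarrow> b \<le> j)"

definition leadA :: "tree list \<Rightarrow> tree \<Rightarrow> nat" where
  "leadA anc s = size {# p \<in># pnodes s. leading (anc @ p) #}"

primrec pe :: "tree \<Rightarrow> nat" where
  "pe (Nd l cs) = (case l of None \<Rightarrow> 0 | Some a \<Rightarrow> size (filter_mset (\<lambda>c. a < beta c) cs))
     + sum_mset (image_mset pe cs)"

definition gl :: "tree \<Rightarrow> bool" where
  "gl s \<longleftrightarrow> (\<forall>v\<in>#nodes s. labs v \<noteq> {#}) \<and> (\<forall>a. count (labs s) a \<le> 1)"

definition II :: "tree list \<Rightarrow> tree \<Rightarrow> bool" where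
  "II anc s \<longleftrightarrow> beta (last (s # takeWhile (cnd (beta s)) (rev anc))) = beta s"

lemma labs_Nd: "labs (Nd l cs) = (case l of None \<Rightarrow> {#} | Some a \<Rightarrow> {#a#}) + sum_mset (image_mset labs cs)"
  by simp

lemma labs_kid_sub: "c \<in># cs \<Longrightarrow> labs c \<subseteq># labs (Nd l cs)"
proof -
  assume "c \<in># cs"
  then have "labs c \<subseteq># sum_mset (image_mset labs cs)"
    by (metis image_mset_add_mset insert_DiffM mset_subset_eq_add_left sum_mset.insert)
  then show ?thesis by (simp add: subset_mset.add_increasing)
qed

lemma gl_kid: assumes "gl (Nd l cs)" "c \<in># cs" shows "gl c"
proof -
  have "labs c \<subseteq># labs (Nd l cs)" using labs_kid_sub[OF assms(2)] .
  then have "\<forall>a. count (labs c) a \<le> 1" using assms(1) unfolding gl_def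
    by (meson le_trans mset_subset_eq_count)
  moreover have "\<forall>v\<in>#nodes c. labs v \<noteq> {#}" using assms unfolding gl_def by auto
  ultimately show ?thesis unfolding gl_def by blast
qed

lemma gl_ne: "gl s \<Longrightarrow> labs s \<noteq> {#}"
  by (cases s) (auto simp: gl_def)

lemma beta_mem: "labs s \<noteq> {#} \<Longrightarrow> beta s \<in># labs s"
  unfolding beta_def by (simp add: Min_in)

lemma beta_le: "a \<in># labs s \<Longrightarrow> beta s \<le> a"
  unfolding beta_def by simp

lemma beta_mono: "labs s \<subseteq># labs g \<Longrightarrow> labs s \<noteq> {#} \<Longrightarrow> beta g \<le> beta s"
  by (meson beta_le beta_mem mset_subset_eqD)

lemma size_filter_sum: "size (filter_mset P (sum_mset (image_mset f cs))) = sum_mset (image_mset (\<lambda>c. size (filter_mset P (f c))) cs)"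
  by (induction cs) auto

lemma sum_ind: "sum_mset (image_mset (\<lambda>c. if P c then 1 else 0) cs) = (size (filter_mset P cs) :: nat)"
  by (induction cs) auto

lemma size_filter_count: "(\<forall>c\<in>#cs. count (f c) b \<le> 1) \<Longrightarrow>
   size (filter_mset (\<lambda>c. b \<in># f c) cs) = count (sum_mset (image_mset f cs)) b"
proof (induction cs)
  case empty then show ?case by simp
next
  case (add x cs)
  have "count (f x) b \<le> 1" using add.prems by simp
  then have "(if b \<in># f x then 1 else 0) = count (f x) b"
    by (metis One_nat_def Suc_leI le_antisym count_greater_zero_iff not_gr0)
  then show ?case using add by auto
qed

lemma leadA_Nd: "leadA anc (Nd l cs) = (if leading (anc @ [Nd l cs]) then 1 else 0)
   + sum_mset (image_mset (leadA (anc @ [Nd l cs])) cs)"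
proof -
  have "leadA anc (Nd l cs) = size (filter_mset (\<lambda>p. leading (anc @ p)) ({#[Nd l cs]#}
     + sum_mset (image_mset (\<lambda>c. image_mset (\<lambda>p. Nd l cs # p) (pnodes c)) cs)))"
    unfolding leadA_def by simp
  also have "\<dots> = (if leading (anc @ [Nd l cs]) then 1 else 0)
     + sum_mset (image_mset (\<lambda>c. size (filter_mset (\<lambda>p. leading (anc @ p)) (image_mset (\<lambda>p. Nd l cs # p) (pnodes c)))) cs)"
    by (simp add: size_filter_sum)
  also have "\<dots> = (if leading (anc @ [Nd l cs]) then 1 else 0)
     + sum_mset (image_mset (leadA (anc @ [Nd l cs])) cs)"
    unfolding leadA_def by (simp add: filter_mset_image_mset)
  finally show ?thesis .
qed

lemma gap_top_snoc: "gap_top (anc @ [s]) = last (s # takeWhile (cnd (the (lab s))) (rev anc))"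
proof -
  have "gap_top (anc @ [s]) = last (takeWhile (cnd (the (lab s))) (s # rev anc))"
    unfolding gap_top_def cnd_def by (simp only: last_snoc rev_append rev.simps append.simps)
  moreover have "cnd (the (lab s)) s" unfolding cnd_def by (cases "lab s") auto
  ultimately show ?thesis by simp
qed

lemma II_root: assumes "lab s = Some a" "gl s" "\<forall>g\<in>set anc. labs s \<subseteq># labs g"
  shows "leading (anc @ [s]) \<longleftrightarrow> a = beta s \<and> II anc s"
proof -
  let ?g = "last (s # takeWhile (cnd a) (rev anc))"
  have L: "leading (anc @ [s]) \<longleftrightarrow> beta ?g = a"
    unfolding leading_def using gap_top_snoc[of anc s] assms(1) by simp
  have gin: "?g \<in> set (s # rev anc)"
    by (metis last_in_set list.simps(3) set_takeWhileD set_ConsD list.set_intros)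
  have sub: "labs s \<subseteq># labs ?g" using gin assms(3) by auto
  have ne: "labs s \<noteq> {#}" using gl_ne[OF assms(2)] .
  have bg: "beta ?g \<le> beta s" using beta_mono[OF sub ne] .
  have "a \<in># labs s" using assms(1) by (cases s) auto
  then have bs: "beta s \<le> a" by (rule beta_le)
  show ?thesis
  proof (cases "a = beta s")
    case True then show ?thesis using L unfolding II_def by simp
  next
    case False then show ?thesis using L bg bs by simp
  qed
qed

lemma II_child: assumes "gl (Nd l cs)" "c \<in># cs" "\<forall>g\<in>set anc. labs (Nd l cs) \<subseteq># labs g"
  shows "II (anc @ [Nd l cs]) c \<longleftrightarrow> (\<exists>a. l = Some a \<and> a < beta c) \<or> (beta c = beta (Nd l cs) \<and> II anc (Nd l cs))"
proof -
  let ?s = "Nd l cs"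
  have subc: "labs c \<subseteq># labs ?s" using labs_kid_sub[OF assms(2)] .
  have nec: "labs c \<noteq> {#}" using gl_ne[OF gl_kid[OF assms(1,2)]] .
  have bsc: "beta ?s \<le> beta c" using beta_mono[OF subc nec] .
  show ?thesis
  proof (cases "cnd (beta c) ?s")
    case False
    then obtain a where a: "l = Some a" "a < beta c" unfolding cnd_def by (cases l) auto
    then show ?thesis unfolding II_def using False by simp
  next
    case True
    then have nA: "\<not> (\<exists>a. l = Some a \<and> a < beta c)" unfolding cnd_def by auto
    let ?g = "last (?s # takeWhile (cnd (beta c)) (rev anc))"
    have eq: "II (anc @ [?s]) c \<longleftrightarrow> beta ?g = beta c"
      unfolding II_def using True by simp
    have gin: "?g \<in> set (?s # rev anc)"
      by (metis last_in_set list.simps(3) set_takeWhileD set_ConsD list.set_intros)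
    have sub: "labs ?s \<subseteq># labs ?g" using gin assms(3) by auto
    have ne: "labs ?s \<noteq> {#}" using gl_ne[OF assms(1)] .
    have bg: "beta ?g \<le> beta ?s" using beta_mono[OF sub ne] .
    show ?thesis
    proof (cases "beta c = beta ?s")
      case True
      have "II (anc @ [?s]) c \<longleftrightarrow> II anc ?s" using eq True unfolding II_def by simp
      then show ?thesis using nA True by blast
    next
      case False then show ?thesis using eq nA bg bsc by simp
    qed
  qed
qed

lemma sum_mset_cong_add: "(\<And>c. c \<in># cs \<Longrightarrow> f c = g c + h c) \<Longrightarrow>
   sum_mset (image_mset f cs) = sum_mset (image_mset g cs) + (sum_mset (image_mset h cs) :: nat)"
proof -
  assume "\<And>c. c \<in># cs \<Longrightarrow> f c = g c + h c"
  then have "image_mset f cs = image_mset (\<lambda>c. g c + h c) cs" by (rule image_mset_cong)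
  then show ?thesis by (simp add: sum_mset.distrib)
qed

lemma leadA_pe: "gl s \<Longrightarrow> \<forall>g\<in>set anc. labs s \<subseteq># labs g \<Longrightarrow>
   leadA anc s = pe s + (if II anc s then 1 else 0)"
proof (induction s arbitrary: anc)
  case (Nd l cs)
  let ?s = "Nd l cs"
  let ?A = "\<lambda>c. \<exists>a. l = Some a \<and> a < beta c"
  let ?B = "\<lambda>c. beta c = beta ?s"
  let ?i = "if II anc ?s then 1 else (0::nat)"
  have anc2: "\<forall>g\<in>set (anc @ [?s]). labs c \<subseteq># labs g" if "c \<in># cs" for c
    using labs_kid_sub[OF that] Nd.prems(2) by (auto intro: subset_mset.order_trans)
  have ex: "\<not> (?A c \<and> ?B c)" if "c \<in># cs" for c
  proof
    assume "?A c \<and> ?B c"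
    then obtain a where a: "l = Some a" "a < beta c" "beta c = beta ?s" by blast
    have "a \<in># labs ?s" using a(1) by simp
    then have "beta ?s \<le> a" by (rule beta_le)
    then show False using a by simp
  qed
  have kid: "leadA (anc @ [?s]) c = pe c + ((if ?A c then 1 else 0) + (if ?B c then 1 else 0) * ?i)"
    if c: "c \<in># cs" for c
  proof -
    have "leadA (anc @ [?s]) c = pe c + (if II (anc @ [?s]) c then 1 else 0)"
      using Nd.IH[OF c gl_kid[OF Nd.prems(1) c] anc2[OF c]] .
    moreover have "II (anc @ [?s]) c \<longleftrightarrow> ?A c \<or> (?B c \<and> II anc ?s)"
      using II_child[OF Nd.prems(1) c Nd.prems(2)] .
    ultimately show ?thesis using ex[OF c] by auto
  qed
  have S1: "sum_mset (image_mset (leadA (anc @ [?s])) cs) = sum_mset (image_mset pe cs)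
      + sum_mset (image_mset (\<lambda>c. (if ?A c then 1 else 0) + (if ?B c then 1 else 0) * ?i) cs)"
    using kid by (rule sum_mset_cong_add)
  have S2: "sum_mset (image_mset (\<lambda>c. (if ?A c then 1 else 0) + (if ?B c then 1 else 0) * ?i) cs)
      = size (filter_mset ?A cs) + size (filter_mset ?B cs) * ?i"
    by (simp add: sum_mset.distrib sum_ind sum_mset_distrib_right[symmetric])
  have glc: "gl c" if "c \<in># cs" for c using gl_kid[OF Nd.prems(1) that] .
  have B_iff: "?B c \<longleftrightarrow> beta ?s \<in># labs c" if c: "c \<in># cs" for c
  proof
    assume "?B c" then show "beta ?s \<in># labs c" using beta_mem[OF gl_ne[OF glc[OF c]]] by simp
  next
    assume m: "beta ?s \<in># labs c"
    have "beta c \<le> beta ?s" using beta_le[OF m] .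
    moreover have "beta ?s \<le> beta c" using beta_mono[OF labs_kid_sub[OF c] gl_ne[OF glc[OF c]]] .
    ultimately show "?B c" by simp
  qed
  have cnt1: "count (labs c) b \<le> 1" if "c \<in># cs" for c b
    using glc[OF that] unfolding gl_def by blast
  have szB: "size (filter_mset ?B cs) = count (sum_mset (image_mset labs cs)) (beta ?s)"
  proof -
    have "filter_mset ?B cs = filter_mset (\<lambda>c. beta ?s \<in># labs c) cs"
      using B_iff by (rule filter_mset_cong[OF refl])
    then show ?thesis using size_filter_count[of cs labs "beta ?s"] cnt1 by simp
  qed
  have one: "count (labs ?s) (beta ?s) = 1"
  proof -
    have "beta ?s \<in># labs ?s" using beta_mem[OF gl_ne[OF Nd.prems(1)]] .
    moreover have "count (labs ?s) (beta ?s) \<le> 1" using Nd.prems(1) unfolding gl_def by blast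
    ultimately show ?thesis by (metis One_nat_def Suc_leI count_greater_zero_iff le_antisym)
  qed
  show ?case
  proof (cases l)
    case None
    have lf: "\<not> leading (anc @ [?s])" unfolding leading_def using None by simp
    have fa: "filter_mset ?A cs = {#}" using None by simp
    have "count (sum_mset (image_mset labs cs)) (beta ?s) = 1" using one None by simp
    then show ?thesis using lf fa S1 S2 szB leadA_Nd[of anc l cs] None by simp
  next
    case (Some a)
    have lf: "leading (anc @ [?s]) \<longleftrightarrow> a = beta ?s \<and> II anc ?s"
      using II_root[of ?s a, OF _ Nd.prems] Some by simp
    have fa: "filter_mset ?A cs = filter_mset (\<lambda>c. a < beta c) cs" using Some by simp
    have "(if a = beta ?s then 1 else 0) + count (sum_mset (image_mset labs cs)) (beta ?s) = (1::nat)"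
    proof -
      have "count (labs ?s) (beta ?s) = (if a = beta ?s then 1 else 0) + count (sum_mset (image_mset labs cs)) (beta ?s)"
        using Some by simp
      then show ?thesis using one by linarith
    qed
    then have L: "(if leading (anc @ [?s]) then 1 else 0) + size (filter_mset ?B cs) * ?i = ?i"
      using lf szB by (cases "II anc ?s"; cases "a = beta ?s") simp_all
    have "leadA anc ?s = (if leading (anc @ [?s]) then 1 else 0) + (sum_mset (image_mset pe cs)
      + (size (filter_mset ?A cs) + size (filter_mset ?B cs) * ?i))"
      using leadA_Nd[of anc l cs] S1 S2 by simp
    also have "\<dots> = size (filter_mset ?A cs) + sum_mset (image_mset pe cs) + ?i"
      using L by simp
    also have "size (filter_mset ?A cs) + sum_mset (image_mset pe cs) = pe ?s"
      using fa Some by simp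
    finally show ?thesis .
  qed
qed

lemma lead_pe: "gl T \<Longrightarrow> lead T = pe T + 1"
proof -
  assume "gl T"
  have "lead T = leadA [] T" unfolding lead_def leadA_def by simp
  also have "\<dots> = pe T + (if II [] T then 1 else 0)" using leadA_pe[of T "[]"] \<open>gl T\<close> by simp
  finally show ?thesis unfolding II_def by simp
qed




lemma mem_sum_image: "x \<in># sum_mset (image_mset f M) \<longleftrightarrow> (\<exists>y\<in>#M. x \<in># f y)"
  by (induction M) auto

definition good :: "tree \<Rightarrow> bool" where
  "good s \<longleftrightarrow> (\<forall>v\<in>#nodes s. lab v = None \<longrightarrow> 2 \<le> size (kids v))"

lemma good_Nd: "good (Nd l cs) \<longleftrightarrow> (l = None \<longrightarrow> 2 \<le> size cs) \<and> (\<forall>c\<in>#cs. good c)"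
  unfolding good_def by (auto simp: mem_sum_image)

primrec insN :: "nat \<Rightarrow> tree \<Rightarrow> tree multiset" where
  "insN M (Nd l cs) = {#Nd (Some M) {#Nd l cs#}, Nd None {#Nd l cs, Nd (Some M) {#}#}#}
     + (if l = None then {#Nd (Some M) cs#} else {#})
     + image_mset (Nd l) (add_mset (add_mset (Nd (Some M) {#}) cs)
         (sum_mset (image_mset (\<lambda>c. image_mset (\<lambda>c'. add_mset c' (cs - {#c#})) (insN M c)) cs)))"

definition insK :: "nat \<Rightarrow> tree multiset \<Rightarrow> tree multiset multiset" where
  "insK M cs = add_mset (add_mset (Nd (Some M) {#}) cs)
         (sum_mset (image_mset (\<lambda>c. image_mset (\<lambda>c'. add_mset c' (cs - {#c#})) (insN M c)) cs))"

lemma insN_Nd: "insN M (Nd l cs) = {#Nd (Some M) {#Nd l cs#}, Nd None {#Nd l cs, Nd (Some M) {#}#}#}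
     + (if l = None then {#Nd (Some M) cs#} else {#}) + image_mset (Nd l) (insK M cs)"
  unfolding insK_def by simp

declare insN.simps[simp del]

primrec dl :: "nat \<Rightarrow> tree \<Rightarrow> tree multiset" where
  "dl M (Nd l cs) = (let cs' = sum_mset (image_mset (dl M) cs) in
     if l = Some M then (if size cs' \<le> 1 then cs' else {#Nd None cs'#})
     else if l = None \<and> size cs' = 1 then cs' else {#Nd l cs'#})"

abbreviation leaf :: "nat \<Rightarrow> tree" where "leaf M \<equiv> Nd (Some M) {#}"

lemma insK_cases:
  assumes "cs' \<in># insK M cs"
  shows "cs' = add_mset (leaf M) cs \<or> (\<exists>c\<in>#cs. \<exists>c'\<in>#insN M c. cs' = add_mset c' (cs - {#c#}))"
  using assms unfolding insK_def by (auto simp: mem_sum_image)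

lemma insN_cases:
  assumes "s' \<in># insN M (Nd l cs)"
  shows "s' = Nd (Some M) {#Nd l cs#} \<or> s' = Nd None {#Nd l cs, leaf M#}
    \<or> (l = None \<and> s' = Nd (Some M) cs) \<or> (\<exists>cs'\<in>#insK M cs. s' = Nd l cs')"
  using assms unfolding insN_Nd by (auto split: if_splits)

lemma sum_replace: "c \<in># cs \<Longrightarrow> sum_mset (image_mset f (add_mset c' (cs - {#c#}))) + f c
   = sum_mset (image_mset f cs) + (f c' :: 'a::comm_monoid_add)"
proof -
  assume "c \<in># cs"
  then have "cs = add_mset c (cs - {#c#})" by simp
  then have "sum_mset (image_mset f cs) = f c + sum_mset (image_mset f (cs - {#c#}))"
    by (metis image_mset_add_mset sum_mset.add_mset)
  then show ?thesis by (simp add: ac_simps)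
qed

lemma labs_ins: "(\<forall>s'\<in>#insN M s. labs s' = add_mset M (labs s))"
proof (induction s)
  case (Nd l cs)
  have K: "sum_mset (image_mset labs cs') = add_mset M (sum_mset (image_mset labs cs))"
    if "cs' \<in># insK M cs" for cs'
  proof -
    from insK_cases[OF that] show ?thesis
    proof
      assume "cs' = add_mset (leaf M) cs" then show ?thesis by simp
    next
      assume "\<exists>c\<in>#cs. \<exists>c'\<in>#insN M c. cs' = add_mset c' (cs - {#c#})"
      then obtain c c' where c: "c \<in># cs" "c' \<in># insN M c" "cs' = add_mset c' (cs - {#c#})" by blast
      have "labs c' = add_mset M (labs c)" using Nd.IH[OF c(1)] c(2) by blast
      then show ?thesis using sum_replace[OF c(1), of labs c'] c(3) by simp
    qed
  qed
  show ?case
  proof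
    fix s' assume "s' \<in># insN M (Nd l cs)"
    from insN_cases[OF this] show "labs s' = add_mset M (labs (Nd l cs))"
      using K by (cases l) auto
  qed
qed

lemma labs_insK: "cs' \<in># insK M cs \<Longrightarrow> sum_mset (image_mset labs cs') = add_mset M (sum_mset (image_mset labs cs))"
proof -
  assume a: "cs' \<in># insK M cs"
  from insK_cases[OF a] show ?thesis
  proof
    assume "cs' = add_mset (leaf M) cs" then show ?thesis by simp
  next
    assume "\<exists>c\<in>#cs. \<exists>c'\<in>#insN M c. cs' = add_mset c' (cs - {#c#})"
    then obtain c c' where c: "c \<in># cs" "c' \<in># insN M c" "cs' = add_mset c' (cs - {#c#})" by blast
    have "labs c' = add_mset M (labs c)" using labs_ins c(2) by blast
    then show ?thesis using sum_replace[OF c(1), of labs c'] c(3) by simp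
  qed
qed

lemma good_insK: "(\<forall>c\<in>#cs. good c) \<Longrightarrow> cs' \<in># insK M cs \<Longrightarrow> (\<forall>c\<in>#cs. \<forall>c'\<in>#insN M c. good c')
   \<Longrightarrow> (\<forall>c\<in>#cs'. good c) \<and> size cs \<le> size cs'"
proof -
  assume g: "\<forall>c\<in>#cs. good c" and a: "cs' \<in># insK M cs" and h: "\<forall>c\<in>#cs. \<forall>c'\<in>#insN M c. good c'"
  from insK_cases[OF a] show ?thesis
  proof
    assume "cs' = add_mset (leaf M) cs" then show ?thesis using g by (auto simp: good_Nd)
  next
    assume "\<exists>c\<in>#cs. \<exists>c'\<in>#insN M c. cs' = add_mset c' (cs - {#c#})"
    then obtain c c' where c: "c \<in># cs" "c' \<in># insN M c" "cs' = add_mset c' (cs - {#c#})" by blast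
    have "size cs' = size cs" using c by (metis insert_DiffM size_add_mset)
    moreover have "\<forall>d\<in>#cs'. good d" using c g h by (auto dest: in_diffD)
    ultimately show ?thesis by simp
  qed
qed

lemma good_ins: "good s \<Longrightarrow> \<forall>s'\<in>#insN M s. good s'"
proof (induction s)
  case (Nd l cs)
  have g: "\<forall>c\<in>#cs. good c" and l2: "l = None \<longrightarrow> 2 \<le> size cs" using Nd.prems by (auto simp: good_Nd)
  have h: "\<forall>c\<in>#cs. \<forall>c'\<in>#insN M c. good c'" using Nd.IH g by blast
  show ?case
  proof
    fix s' assume "s' \<in># insN M (Nd l cs)"
    from insN_cases[OF this] show "good s'"
    proof (elim disjE exE conjE bexE)
      assume "s' = Nd (Some M) {#Nd l cs#}" then show ?thesis using Nd.prems by (simp add: good_Nd)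
    next
      assume "s' = Nd None {#Nd l cs, leaf M#}" then show ?thesis using Nd.prems by (simp add: good_Nd)
    next
      assume "l = None" "s' = Nd (Some M) cs" then show ?thesis using g by (simp add: good_Nd)
    next
      fix cs' assume "cs' \<in># insK M cs" "s' = Nd l cs'"
      then show ?thesis using good_insK[OF g _ h] l2 by (force simp: good_Nd)
    qed
  qed
qed

lemma sum_singletons: "sum_mset (image_mset (\<lambda>c. {#c#}) cs) = cs"
  by (induction cs) auto

lemma dl_free: "good s \<Longrightarrow> M \<notin># labs s \<Longrightarrow> dl M s = {#s#}"
proof (induction s)
  case (Nd l cs)
  have g: "\<forall>c\<in>#cs. good c" and l2: "l = None \<longrightarrow> 2 \<le> size cs" using Nd.prems by (auto simp: good_Nd)
  have "\<forall>c\<in>#cs. M \<notin># labs c" using Nd.prems(2) by (auto simp: mem_sum_image)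
  then have "image_mset (dl M) cs = image_mset (\<lambda>c. {#c#}) cs" using Nd.IH g
    by (intro image_mset_cong) blast
  then have S: "sum_mset (image_mset (dl M) cs) = cs" by (simp add: sum_singletons)
  have "l \<noteq> Some M" using Nd.prems(2) by auto
  then show ?case using S l2 by (auto simp: Let_def)
qed

lemma sum_dl_id: "(\<forall>d\<in>#A. dl M d = {#d#}) \<Longrightarrow> sum_mset (image_mset (dl M) A) = A"
proof -
  assume "\<forall>d\<in>#A. dl M d = {#d#}"
  then have "image_mset (dl M) A = image_mset (\<lambda>c. {#c#}) A" by (intro image_mset_cong) blast
  then show ?thesis by (simp add: sum_singletons)
qed

lemma dl_leaf: "dl M (leaf M) = {#}" by simp

lemma dl_B: "dl M s = {#s#} \<Longrightarrow> dl M (Nd (Some M) {#s#}) = {#s#}"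
  by (subst dl.simps) (simp add: Let_def)

lemma dl_C: "dl M s = {#s#} \<Longrightarrow> dl M (Nd None {#s, leaf M#}) = {#s#}"
  by (subst dl.simps) (simp add: Let_def)

lemma kids_free: "M \<notin># labs (Nd l cs) \<Longrightarrow> c \<in># cs \<Longrightarrow> M \<notin># labs c"
  by (auto simp: mem_sum_image)

lemma dl_ins: "good s \<Longrightarrow> M \<notin># labs s \<Longrightarrow> \<forall>s'\<in>#insN M s. dl M s' = {#s#}"
proof (induction s)
  case (Nd l cs)
  have g: "\<forall>c\<in>#cs. good c" and l2: "l = None \<longrightarrow> 2 \<le> size cs" using Nd.prems by (auto simp: good_Nd)
  have fr: "\<forall>c\<in>#cs. M \<notin># labs c" using kids_free[OF Nd.prems(2)] by blast
  have id: "\<forall>c\<in>#cs. dl M c = {#c#}" using dl_free g fr by blast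
  have lM: "l \<noteq> Some M" using Nd.prems(2) by auto
  have K: "sum_mset (image_mset (dl M) cs') = cs" if "cs' \<in># insK M cs" for cs'
  proof -
    from insK_cases[OF that] show ?thesis
    proof
      assume "cs' = add_mset (leaf M) cs" then show ?thesis using sum_dl_id[OF id] by simp
    next
      assume "\<exists>c\<in>#cs. \<exists>c'\<in>#insN M c. cs' = add_mset c' (cs - {#c#})"
      then obtain c c' where c: "c \<in># cs" "c' \<in># insN M c" "cs' = add_mset c' (cs - {#c#})" by blast
      have "dl M c' = {#c#}" using Nd.IH[OF c(1)] g fr c by blast
      moreover have "sum_mset (image_mset (dl M) (cs - {#c#})) = cs - {#c#}"
        using id by (intro sum_dl_id) (auto dest: in_diffD)
      ultimately show ?thesis using c by simp
    qed
  qed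
  show ?case
  proof
    fix s' assume "s' \<in># insN M (Nd l cs)"
    from insN_cases[OF this] show "dl M s' = {#Nd l cs#}"
    proof (elim disjE exE conjE bexE)
      assume "s' = Nd (Some M) {#Nd l cs#}" then show ?thesis using dl_B[OF dl_free[OF Nd.prems]] by simp
    next
      assume "s' = Nd None {#Nd l cs, leaf M#}" then show ?thesis using dl_C[OF dl_free[OF Nd.prems]] by simp
    next
      assume "l = None" "s' = Nd (Some M) cs" then show ?thesis using l2 sum_dl_id[OF id] by (simp add: Let_def)
    next
      fix cs' assume "cs' \<in># insK M cs" "s' = Nd l cs'"
      then show ?thesis using K lM l2 by (auto simp: Let_def)
    qed
  qed
qed

lemma dl_insK: "\<forall>c\<in>#cs. good c \<and> M \<notin># labs c \<Longrightarrow> cs' \<in># insK M cs \<Longrightarrow> sum_mset (image_mset (dl M) cs') = cs"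
proof -
  assume gf: "\<forall>c\<in>#cs. good c \<and> M \<notin># labs c" and a: "cs' \<in># insK M cs"
  have id: "\<forall>c\<in>#cs. dl M c = {#c#}" using dl_free gf by blast
  from insK_cases[OF a] show ?thesis
  proof
    assume "cs' = add_mset (leaf M) cs" then show ?thesis using sum_dl_id[OF id] by simp
  next
    assume "\<exists>c\<in>#cs. \<exists>c'\<in>#insN M c. cs' = add_mset c' (cs - {#c#})"
    then obtain c c' where c: "c \<in># cs" "c' \<in># insN M c" "cs' = add_mset c' (cs - {#c#})" by blast
    have "dl M c' = {#c#}" using dl_ins gf c by blast
    moreover have "sum_mset (image_mset (dl M) (cs - {#c#})) = cs - {#c#}"
      using id by (intro sum_dl_id) (auto dest: in_diffD)
    ultimately show ?thesis using c by simp
  qed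
qed

definition RV :: "nat \<Rightarrow> tree \<Rightarrow> bool" where
  "RV M c \<longleftrightarrow> (c = leaf M \<and> dl M c = {#}) \<or> (\<exists>c0. dl M c = {#c0#} \<and> c \<in># insN M c0 \<and> good c0 \<and> M \<notin># labs c0)"

lemma split_one: assumes "count (sum_mset (image_mset labs cs)) M = 1"
  shows "\<exists>c0 cs1. cs = add_mset c0 cs1 \<and> count (labs c0) M = 1 \<and> M \<notin># sum_mset (image_mset labs cs1)"
proof -
  have "M \<in># sum_mset (image_mset labs cs)" using assms by (metis count_eq_zero_iff one_neq_zero)
  then obtain c0 where c0: "c0 \<in># cs" "M \<in># labs c0" by (auto simp: mem_sum_image)
  let ?cs1 = "cs - {#c0#}"
  have e: "cs = add_mset c0 ?cs1" using c0 by simp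
  then have "count (sum_mset (image_mset labs cs)) M = count (labs c0) M + count (sum_mset (image_mset labs ?cs1)) M"
    by (metis count_union image_mset_add_mset sum_mset.add_mset)
  moreover have "count (labs c0) M \<ge> 1" using c0 by (simp add: Suc_le_eq)
  ultimately have "count (labs c0) M = 1" "count (sum_mset (image_mset labs ?cs1)) M = 0" using assms by linarith+
  then show ?thesis using e by (metis count_eq_zero_iff)
qed

lemma forest_rev:
  assumes g: "\<forall>c\<in>#cs. good c" and one: "count (sum_mset (image_mset labs cs)) M = 1"
    and IH: "\<forall>c\<in>#cs. count (labs c) M = 1 \<longrightarrow> RV M c"
  shows "cs \<in># insK M (sum_mset (image_mset (dl M) cs))
    \<and> (\<forall>c\<in>#sum_mset (image_mset (dl M) cs). good c \<and> M \<notin># labs c)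
    \<and> (cs = add_mset (leaf M) (sum_mset (image_mset (dl M) cs)) \<or> size (sum_mset (image_mset (dl M) cs)) = size cs)"
proof -
  obtain c0 cs1 where c: "cs = add_mset c0 cs1" "count (labs c0) M = 1" "M \<notin># sum_mset (image_mset labs cs1)"
    using split_one[OF one] by blast
  have fr1: "\<forall>d\<in>#cs1. good d \<and> M \<notin># labs d" using c g by (auto simp: mem_sum_image)
  have id1: "sum_mset (image_mset (dl M) cs1) = cs1" using fr1 dl_free by (intro sum_dl_id) blast
  have rv: "RV M c0" using IH c by simp
  have S: "sum_mset (image_mset (dl M) cs) = dl M c0 + cs1" using c id1 by simp
  from rv[unfolded RV_def] show ?thesis
  proof (elim disjE exE conjE)
    assume "c0 = leaf M" "dl M c0 = {#}"
    then show ?thesis using S c fr1 unfolding insK_def by simp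
  next
    fix c00 assume h: "dl M c0 = {#c00#}" "c0 \<in># insN M c00" "good c00" "M \<notin># labs c00"
    let ?cs' = "add_mset c00 cs1"
    have S': "sum_mset (image_mset (dl M) cs) = ?cs'" using S h by simp
    have "cs = add_mset c0 (?cs' - {#c00#})" using c by simp
    then have "cs \<in># insK M ?cs'" unfolding insK_def using h(2)
      by (auto simp: mem_sum_image intro!: bexI[of _ c00])
    then show ?thesis using S' h fr1 c by auto
  qed
qed

lemma node_rev: "good s \<Longrightarrow> count (labs s) M = 1 \<Longrightarrow> RV M s"
proof (induction s)
  case (Nd l cs)
  have g: "\<forall>c\<in>#cs. good c" and l2: "l = None \<longrightarrow> 2 \<le> size cs" using Nd.prems by (auto simp: good_Nd)
  show ?case
  proof (cases "l = Some M")
    case True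
    have "count (sum_mset (image_mset labs cs)) M = 0" using Nd.prems(2) True by simp
    then have fr: "\<forall>c\<in>#cs. M \<notin># labs c" by (auto simp: mem_sum_image count_eq_zero_iff)
    have id: "sum_mset (image_mset (dl M) cs) = cs" using fr g dl_free by (intro sum_dl_id) blast
    show ?thesis
    proof (cases "size cs")
      case 0 then show ?thesis using True id unfolding RV_def by simp
    next
      case (Suc k)
      show ?thesis
      proof (cases k)
        case 0
        then obtain c where cs: "cs = {#c#}" using Suc by (metis One_nat_def size_1_singleton_mset)
        have "Nd (Some M) {#c#} \<in># insN M c" by (cases c) (simp add: insN_Nd)
        then show ?thesis using True id g fr cs unfolding RV_def by simp
      next
        case (Suc k')
        then have "2 \<le> size cs" using \<open>size cs = Suc k\<close> by simp
        then show ?thesis using True id g fr unfolding RV_def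
          by (auto simp: insN_Nd good_Nd Let_def intro!: exI[of _ "Nd None cs"])
      qed
    qed
  next
    case False
    have one: "count (sum_mset (image_mset labs cs)) M = 1" using Nd.prems(2) False by (cases l) auto
    have IH: "\<forall>c\<in>#cs. count (labs c) M = 1 \<longrightarrow> RV M c" using Nd.IH g by blast
    let ?cs' = "sum_mset (image_mset (dl M) cs)"
    have F: "cs \<in># insK M ?cs'" "\<forall>c\<in>#?cs'. good c \<and> M \<notin># labs c"
      "cs = add_mset (leaf M) ?cs' \<or> size ?cs' = size cs" using forest_rev[OF g one IH] by blast+
    show ?thesis
    proof (cases "l = None \<and> size ?cs' = 1")
      case True
      then have "cs = add_mset (leaf M) ?cs'" using F(3) l2 by auto
      moreover obtain d where d: "?cs' = {#d#}" using True by (metis One_nat_def size_1_singleton_mset)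
      moreover have "Nd None {#d, leaf M#} \<in># insN M d" by (cases d) (simp add: insN_Nd)
      ultimately show ?thesis using True F(2) unfolding RV_def
        by (auto simp: Let_def add_mset_commute)
    next
      case c2: False
      have "dl M (Nd l cs) = {#Nd l ?cs'#}" by (simp only: dl.simps Let_def if_not_P[OF False] if_not_P[OF c2])
      moreover have "Nd l cs \<in># insN M (Nd l ?cs')" using F(1) by (simp add: insN_Nd)
      moreover have "good (Nd l ?cs')"
      proof -
        have "l = None \<longrightarrow> 2 \<le> size ?cs'"
        proof
          assume ln: "l = None"
          then have s2: "2 \<le> size cs" using l2 by simp
          from F(3) show "2 \<le> size ?cs'"
          proof
            assume e: "cs = add_mset (leaf M) ?cs'"
            then have "size ?cs' \<noteq> 1" using c2 ln by simp
            moreover have "size cs = Suc (size ?cs')" using e by (metis size_add_mset)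
            ultimately show ?thesis using s2 by linarith
          qed (use s2 in simp)
        qed
        then show ?thesis using F(2) by (simp add: good_Nd)
      qed
      moreover have "M \<notin># labs (Nd l ?cs')" using F(2) False by (cases l) (auto simp: mem_sum_image)
      ultimately show ?thesis unfolding RV_def by blast
    qed
  qed
qed




definition distm :: "'a multiset \<Rightarrow> bool" where "distm A \<longleftrightarrow> (\<forall>x. count A x \<le> 1)"

lemma dist_empty[simp]: "distm {#}" unfolding distm_def by simp

lemma dist_add_mset[simp]: "distm (add_mset a A) \<longleftrightarrow> a \<notin># A \<and> distm A"
proof
  assume h: "distm (add_mset a A)"
  have "count A a = 0" using h unfolding distm_def by (metis Suc_le_eq count_add_mset less_one)
  moreover have "count A x \<le> 1" for x
  proof -
    have "count A x \<le> count (add_mset a A) x" by simp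
    then show ?thesis using h unfolding distm_def by (meson le_trans)
  qed
  ultimately show "a \<notin># A \<and> distm A" unfolding distm_def by (simp add: count_eq_zero_iff)
next
  assume h: "a \<notin># A \<and> distm A"
  show "distm (add_mset a A)" unfolding distm_def
  proof
    fix x show "count (add_mset a A) x \<le> 1"
      using h unfolding distm_def by (cases "x = a") (auto simp: count_eq_zero_iff)
  qed
qed

lemma dist_plus: "distm A \<Longrightarrow> distm B \<Longrightarrow> (\<And>x. x \<in># A \<Longrightarrow> x \<notin># B) \<Longrightarrow> distm (A + B)"
  by (induction A) auto

lemma dist_image: "distm A \<Longrightarrow> (\<And>x y. x \<in># A \<Longrightarrow> y \<in># A \<Longrightarrow> f x = f y \<Longrightarrow> x = y) \<Longrightarrow> distm (image_mset f A)"
proof (induction A)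
  case empty then show ?case by simp
next
  case (add a A)
  have "f a \<notin># image_mset f A"
  proof
    assume "f a \<in># image_mset f A"
    then obtain b where "b \<in># A" "f b = f a" by auto
    then have "b = a" using add.prems(2)[of b a] by simp
    then show False using add.prems(1) \<open>b \<in># A\<close> by simp
  qed
  then show ?case using add by simp
qed

lemma nodes_size: "c \<in># cs \<Longrightarrow> size (nodes c) < size (nodes (Nd l cs))"
proof -
  assume "c \<in># cs"
  then have "nodes c \<subseteq># sum_mset (image_mset nodes cs)"
    by (metis insert_DiffM mset_subset_eq_add_left sum_mset.insert image_mset_add_mset)
  then have "size (nodes c) \<le> size (sum_mset (image_mset nodes cs))" by (rule size_mset_mono)
  then show ?thesis by simp
qed

lemma not_own_kid: "Nd l cs \<notin># cs"
  using nodes_size[of "Nd l cs" cs l] by auto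

lemma gl_dist_kids: assumes "gl (Nd l cs)" shows "distm cs"
  unfolding distm_def
proof
  fix c
  show "count cs c \<le> 1"
  proof (rule ccontr)
    assume "\<not> count cs c \<le> 1"
    then have c2: "count cs c \<ge> 2" by simp
    then have cin: "c \<in># cs" by (metis count_eq_zero_iff not_numeral_le_zero)
    have "{#c, c#} \<subseteq># cs" using c2 by (simp add: subseteq_mset_def)
    then obtain r where "cs = {#c, c#} + r" by (metis subset_mset.le_iff_add)
    then have "sum_mset (image_mset labs cs) = labs c + labs c + sum_mset (image_mset labs r)" by simp
    moreover have "labs c \<noteq> {#}" using gl_ne[OF gl_kid[OF assms cin]] .
    then obtain a where a: "a \<in># labs c" by blast
    ultimately have "count (sum_mset (image_mset labs cs)) a \<ge> 2"
      by (simp add: count_greater_zero_iff[symmetric] del: count_greater_zero_iff)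
    moreover have "count (labs (Nd l cs)) a \<ge> count (sum_mset (image_mset labs cs)) a" by (cases l) auto
    moreover have "count (labs (Nd l cs)) a \<le> 1" using assms unfolding gl_def by blast
    ultimately show False by linarith
  qed
qed

lemma ins_ne: "c' \<in># insN M c \<Longrightarrow> M \<notin># labs c \<Longrightarrow> c' \<noteq> c"
proof
  assume a: "c' \<in># insN M c" "M \<notin># labs c" "c' = c"
  have "labs c' = add_mset M (labs c)" using labs_ins a(1) by blast
  then show False using a by simp
qed

lemma dist_count: "distm A \<Longrightarrow> x \<in># A \<Longrightarrow> x \<in># A - {#x#} \<Longrightarrow> False"
  unfolding distm_def by (metis count_eq_zero_iff dist_add_mset distm_def insert_DiffM)

lemma dist_sumF:
  assumes dc: "distm cs" and kc: "\<forall>c\<in>#cs. distm (insN M c) \<and> (\<forall>c'\<in>#insN M c. c' \<noteq> c)"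
  shows "A \<subseteq># cs \<Longrightarrow> distm (sum_mset (image_mset (\<lambda>c. image_mset (\<lambda>c'. add_mset c' (cs - {#c#})) (insN M c)) A))"
proof (induction A)
  case empty then show ?case by simp
next
  case (add a A)
  let ?F = "\<lambda>c. image_mset (\<lambda>c'. add_mset c' (cs - {#c#})) (insN M c)"
  have A: "A \<subseteq># cs" using add.prems by (meson mset_subset_eq_insertD subset_mset.less_imp_le)
  have acs: "a \<in># cs" using add.prems by (simp add: insert_subset_eq_iff)
  have anA: "a \<notin># A"
  proof
    assume "a \<in># A"
    then have "count (add_mset a A) a \<ge> 2" by (simp add: Suc_le_eq)
    moreover have "count (add_mset a A) a \<le> count cs a" using add.prems by (metis mset_subset_eq_count)
    moreover have "count cs a \<le> 1" using dc unfolding distm_def by blast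
    ultimately show False by linarith
  qed
  have dF: "distm (?F a)" using kc acs by (intro dist_image) auto
  have disj: "x \<notin># sum_mset (image_mset ?F A)" if x: "x \<in># ?F a" for x
  proof
    assume "x \<in># sum_mset (image_mset ?F A)"
    then obtain d d' where d: "d \<in># A" "d' \<in># insN M d" "x = add_mset d' (cs - {#d#})" by (auto simp: mem_sum_image)
    obtain a' where a': "a' \<in># insN M a" "x = add_mset a' (cs - {#a#})" using x by auto
    have dne: "d \<noteq> a" using d(1) anA by auto
    have dcs: "d \<in># cs" using d(1) A by (auto dest: mset_subset_eqD)
    have "d \<in># cs - {#a#}" using dcs dne by (simp add: in_diff_count)
    then have "d \<in># x" using a' by simp
    then have "d = d' \<or> d \<in># cs - {#d#}" using d(3) by simp
    moreover have "d' \<noteq> d" using kc dcs d(2) by blast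
    ultimately show False using dist_count[OF dc dcs] by blast
  qed
  show ?case using dist_plus[OF dF add.IH[OF A] disj] by simp
qed

lemma dist_insK:
  assumes dc: "distm cs" and kc: "\<forall>c\<in>#cs. distm (insN M c) \<and> (\<forall>c'\<in>#insN M c. c' \<noteq> c)"
  shows "distm (insK M cs)"
proof -
  let ?S = "sum_mset (image_mset (\<lambda>c. image_mset (\<lambda>c'. add_mset c' (cs - {#c#})) (insN M c)) cs)"
  have "distm ?S" using dist_sumF[OF dc kc] by simp
  moreover have "add_mset (leaf M) cs \<notin># ?S"
  proof
    assume "add_mset (leaf M) cs \<in># ?S"
    then obtain c c' where c: "c \<in># cs" "add_mset (leaf M) cs = add_mset c' (cs - {#c#})" by (auto simp: mem_sum_image)
    then have "size (add_mset (leaf M) cs) = size (add_mset c' (cs - {#c#}))" by simp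
    moreover have "size (add_mset c' (cs - {#c#})) = size cs" using c(1) by (metis insert_DiffM size_add_mset)
    ultimately show False by simp
  qed
  ultimately show ?thesis unfolding insK_def by simp
qed

lemma C_notin: assumes "2 \<le> size cs" "M \<notin># labs (Nd l cs)"
  shows "{#Nd l cs, leaf M#} \<notin># insK M cs"
proof
  assume "{#Nd l cs, leaf M#} \<in># insK M cs"
  from insK_cases[OF this] show False
  proof
    assume "{#Nd l cs, leaf M#} = add_mset (leaf M) cs"
    then have "Nd l cs \<in># add_mset (leaf M) cs" by (metis union_single_eq_member)
    then show False using assms(2) not_own_kid by auto
  next
    assume "\<exists>c\<in>#cs. \<exists>c'\<in>#insN M c. {#Nd l cs, leaf M#} = add_mset c' (cs - {#c#})"
    then obtain c c' where c: "c \<in># cs" "c' \<in># insN M c" "{#Nd l cs, leaf M#} = add_mset c' (cs - {#c#})" by blast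
    have "Nd l cs \<in># add_mset c' (cs - {#c#})" using c(3) by (metis add_mset_commute union_single_eq_member)
    then have "Nd l cs = c' \<or> Nd l cs \<in># cs" by (auto dest: in_diffD)
    moreover have "labs c' = add_mset M (labs c)" using labs_ins c(2) by blast
    ultimately show False using assms(2) not_own_kid by auto
  qed
qed

lemma dist_insN: "good s \<Longrightarrow> gl s \<Longrightarrow> M \<notin># labs s \<Longrightarrow> distm (insN M s)"
proof (induction s)
  case (Nd l cs)
  have g: "\<forall>c\<in>#cs. good c" and l2: "l = None \<longrightarrow> 2 \<le> size cs" using Nd.prems by (auto simp: good_Nd)
  have gc: "\<forall>c\<in>#cs. gl c" using gl_kid Nd.prems(2) by blast
  have fr: "\<forall>c\<in>#cs. M \<notin># labs c" using kids_free[OF Nd.prems(3)] by blast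
  have kc: "\<forall>c\<in>#cs. distm (insN M c) \<and> (\<forall>c'\<in>#insN M c. c' \<noteq> c)"
    using Nd.IH g gc fr ins_ne by blast
  have dK: "distm (insK M cs)" using dist_insK[OF gl_dist_kids[OF Nd.prems(2)] kc] .
  have lM: "l \<noteq> Some M" using Nd.prems(3) by auto
  let ?I = "image_mset (Nd l) (insK M cs)"
  let ?D = "(if l = None then {#Nd (Some M) cs#} else {#})"
  have dI: "distm ?I" using dK by (intro dist_image) auto
  have labI: "x \<in># ?I \<Longrightarrow> lab x = l" for x by auto
  have dDI: "distm (?D + ?I)"
    using dI labI by (intro dist_plus) (auto split: if_splits)
  have CnI: "Nd None {#Nd l cs, leaf M#} \<notin># ?I"
  proof
    assume "Nd None {#Nd l cs, leaf M#} \<in># ?I"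
    then have "l = None" "{#Nd l cs, leaf M#} \<in># insK M cs" by auto
    then show False using C_notin[of cs M l] l2 Nd.prems(3) by simp
  qed
  have BnD: "Nd (Some M) {#Nd l cs#} \<notin># ?D"
  proof
    assume "Nd (Some M) {#Nd l cs#} \<in># ?D"
    then have "{#Nd l cs#} = cs" by (auto split: if_splits)
    then have "Nd l cs \<in># cs" by (metis multi_member_last)
    then show False using not_own_kid by blast
  qed
  have "distm ({#Nd (Some M) {#Nd l cs#}, Nd None {#Nd l cs, leaf M#}#} + (?D + ?I))"
    using dDI CnI BnD labI lM by (intro dist_plus) (auto split: if_splits)
  then show ?case unfolding insN_Nd by (simp add: ac_simps)
qed




definition ipl :: "nat option \<Rightarrow> nat \<Rightarrow> nat" where
  "ipl l b = (case l of None \<Rightarrow> 0 | Some a \<Rightarrow> if b = a then 0 else 1)"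

definition pel :: "nat option \<Rightarrow> tree multiset \<Rightarrow> nat" where
  "pel l cs = (case l of None \<Rightarrow> 0 | Some a \<Rightarrow> size (filter_mset (\<lambda>c. a < beta c) cs))"

primrec un :: "tree \<Rightarrow> nat" where
  "un (Nd l cs) = (if l = None then 1 else 0) + sum_mset (image_mset un cs)"

primrec ip :: "tree \<Rightarrow> nat" where
  "ip (Nd l cs) = ipl l (beta (Nd l cs)) + sum_mset (image_mset ip cs)"

primrec nl :: "tree \<Rightarrow> nat" where
  "nl (Nd l cs) = (if l = None then 0 else 1) + sum_mset (image_mset nl cs)"

lemma pe_Nd: "pe (Nd l cs) = pel l cs + sum_mset (image_mset pe cs)"
  unfolding pel_def by simp

declare pe.simps[simp del]

definition Wp :: "real \<Rightarrow> real \<Rightarrow> tree \<Rightarrow> real poly" where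
  "Wp t z s = monom (t ^ ip s * z ^ pe s) (un s)"

definition PP :: "real \<Rightarrow> real \<Rightarrow> tree multiset \<Rightarrow> real poly" where
  "PP t z cs = prod_mset (image_mset (Wp t z) cs)"

lemma prod_monom: "prod_mset (image_mset (\<lambda>c. monom (f c) (g c)) cs) =
   monom (prod_mset (image_mset f cs)) (sum_mset (image_mset g cs))"
  by (induction cs) (auto simp: mult_monom)

lemma prod_pow: "prod_mset (image_mset (\<lambda>c. (t::real) ^ f c * z ^ g c) cs) =
   t ^ sum_mset (image_mset f cs) * z ^ sum_mset (image_mset g cs)"
  by (induction cs) (auto simp: power_add)

lemma PP_monom: "PP t z cs = monom (t ^ sum_mset (image_mset ip cs) * z ^ sum_mset (image_mset pe cs))
    (sum_mset (image_mset un cs))"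
  unfolding PP_def Wp_def by (simp add: prod_monom prod_pow)

lemma Wp_Nd: "Wp t z (Nd l cs) = monom (t ^ ipl l (beta (Nd l cs)) * z ^ pel l cs) (if l = None then 1 else 0) * PP t z cs"
  unfolding PP_monom Wp_def by (simp add: mult_monom pe_Nd power_add mult_ac)

lemma pderiv_PP: "pderiv (prod_mset (image_mset f cs)) =
   sum_mset (image_mset (\<lambda>c. prod_mset (image_mset f (cs - {#c#})) * pderiv (f c)) cs)"
proof (induction cs)
  case empty then show ?case by simp
next
  case (add a A)
  have "image_mset (\<lambda>c. prod_mset (image_mset f (add_mset a A - {#c#})) * pderiv (f c)) A
      = image_mset (\<lambda>c. f a * (prod_mset (image_mset f (A - {#c#})) * pderiv (f c))) A"
  proof (rule image_mset_cong)
    fix c assume "c \<in># A"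
    then have "add_mset a A - {#c#} = add_mset a (A - {#c#})" by (simp add: diff_union_swap2)
    then show "prod_mset (image_mset f (add_mset a A - {#c#})) * pderiv (f c)
        = f a * (prod_mset (image_mset f (A - {#c#})) * pderiv (f c))" by (simp add: mult_ac)
  qed
  then show ?case using add by (simp add: pderiv_mult sum_mset_distrib_left mult_ac add_ac)
qed

lemma good_ne: "good s \<Longrightarrow> labs s \<noteq> {#}"
proof (induction s)
  case (Nd l cs)
  show ?case
  proof (cases l)
    case None
    then have "2 \<le> size cs" "\<forall>c\<in>#cs. good c" using Nd.prems by (auto simp: good_Nd)
    then obtain c where "c \<in># cs" by (metis multiset_nonemptyE not_numeral_le_zero size_empty)
    then have "labs c \<noteq> {#}" using Nd.IH \<open>\<forall>c\<in>#cs. good c\<close> by blast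
    then show ?thesis using labs_kid_sub[OF \<open>c \<in># cs\<close>, of l] by (metis subset_mset.bot_unique)
  qed simp
qed

lemma beta_add: assumes "labs s' = add_mset M (labs s)" "labs s \<noteq> {#}" "\<forall>a\<in>#labs s. a < M"
  shows "beta s' = beta s"
proof -
  have "beta s \<in># labs s" using beta_mem[OF assms(2)] .
  then have "beta s < M" using assms(3) by blast
  moreover have "beta s' = min M (beta s)" unfolding beta_def assms(1)
    using assms(2) by (simp add: Min_insert)
  ultimately show ?thesis by simp
qed

lemma beta_ins: "s' \<in># insN M s \<Longrightarrow> good s \<Longrightarrow> \<forall>a\<in>#labs s. a < M \<Longrightarrow> beta s' = beta s"
  using beta_add labs_ins good_ne by blast

definition cA :: "real \<Rightarrow> real \<Rightarrow> tree \<Rightarrow> real" where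
  "cA t z s = of_nat (nl s) * z + of_nat (un s) + of_nat (nl s + un s) * t"

definition AP :: "real \<Rightarrow> real \<Rightarrow> tree \<Rightarrow> real poly" where
  "AP t z s = [: cA t z s, of_nat (nl s + un s) :]"

lemma sum_sum_image: "sum_mset (image_mset f (sum_mset (image_mset g A))) = sum_mset (image_mset (\<lambda>a. sum_mset (image_mset f (g a))) A)"
  by (induction A) auto

lemma sum_AP: "sum_mset (image_mset (AP t z) cs) = [: sum_mset (image_mset (cA t z) cs), of_nat (sum_mset (image_mset (\<lambda>c. nl c + un c) cs)) :]"
  unfolding AP_def by (induction cs) auto

lemma sum_cA: "sum_mset (image_mset (cA t z) cs) = of_nat (sum_mset (image_mset nl cs)) * z
   + of_nat (sum_mset (image_mset un cs)) + of_nat (sum_mset (image_mset (\<lambda>c. nl c + un c) cs)) * t"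
  unfolding cA_def by (induction cs) (auto simp: algebra_simps)

lemma smult_sum_mset: "smult a (sum_mset (image_mset f A)) = sum_mset (image_mset (\<lambda>x. smult a (f x)) A)"
  by (induction A) (auto simp: smult_add_right)

lemma PP_remove: "c \<in># cs \<Longrightarrow> Wp t z c * PP t z (cs - {#c#}) = PP t z cs"
  unfolding PP_def by (metis image_mset_add_mset insert_DiffM prod_mset.add_mset)

definition NS :: "nat \<Rightarrow> real \<Rightarrow> real \<Rightarrow> tree \<Rightarrow> bool" where
  "NS M t z s \<longleftrightarrow> sum_mset (image_mset (Wp t z) (insN M s)) = Wp t z s * AP t z s + smult t (pderiv (Wp t z s))"

definition innerK :: "nat \<Rightarrow> tree multiset \<Rightarrow> tree multiset multiset" where
  "innerK M cs = sum_mset (image_mset (\<lambda>c. image_mset (\<lambda>c'. add_mset c' (cs - {#c#})) (insN M c)) cs)"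

lemma insK_inner: "insK M cs = add_mset (add_mset (leaf M) cs) (innerK M cs)"
  unfolding insK_def innerK_def ..

lemma forest_sum:
  assumes "\<forall>c\<in>#cs. NS M t z c"
  shows "sum_mset (image_mset (PP t z) (innerK M cs)) = PP t z cs * sum_mset (image_mset (AP t z) cs)
     + smult t (pderiv (PP t z cs))"
proof -
  have step: "sum_mset (image_mset (PP t z) (image_mset (\<lambda>c'. add_mset c' (cs - {#c#})) (insN M c)))
     = PP t z cs * AP t z c + smult t (PP t z (cs - {#c#}) * pderiv (Wp t z c))" if c: "c \<in># cs" for c
  proof -
    have "sum_mset (image_mset (PP t z) (image_mset (\<lambda>c'. add_mset c' (cs - {#c#})) (insN M c)))
      = sum_mset (image_mset (\<lambda>c'. Wp t z c' * PP t z (cs - {#c#})) (insN M c))"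
      unfolding PP_def by (simp add: image_mset.compositionality o_def)
    also have "\<dots> = sum_mset (image_mset (Wp t z) (insN M c)) * PP t z (cs - {#c#})"
      by (simp add: sum_mset_distrib_right)
    also have "\<dots> = (Wp t z c * AP t z c + smult t (pderiv (Wp t z c))) * PP t z (cs - {#c#})"
      using assms c unfolding NS_def by simp
    also have "\<dots> = (Wp t z c * PP t z (cs - {#c#})) * AP t z c + smult t (PP t z (cs - {#c#}) * pderiv (Wp t z c))"
      by (simp add: algebra_simps)
    also have "\<dots> = PP t z cs * AP t z c + smult t (PP t z (cs - {#c#}) * pderiv (Wp t z c))"
      using PP_remove[OF c] by simp
    finally show ?thesis .
  qed
  have "sum_mset (image_mset (PP t z) (innerK M cs)) = sum_mset (image_mset
      (\<lambda>c. PP t z cs * AP t z c + smult t (PP t z (cs - {#c#}) * pderiv (Wp t z c))) cs)"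
    unfolding innerK_def sum_sum_image using step by (metis (no_types, lifting) image_mset_cong)
  also have "\<dots> = PP t z cs * sum_mset (image_mset (AP t z) cs)
     + smult t (sum_mset (image_mset (\<lambda>c. PP t z (cs - {#c#}) * pderiv (Wp t z c)) cs))"
    by (simp add: sum_mset.distrib sum_mset_distrib_left smult_sum_mset del: smult_sum_mset[symmetric])
  also have "sum_mset (image_mset (\<lambda>c. PP t z (cs - {#c#}) * pderiv (Wp t z c)) cs) = pderiv (PP t z cs)"
    unfolding PP_def using pderiv_PP[of "Wp t z" cs] by simp
  finally show ?thesis .
qed

lemma filter_replace: "c \<in># cs \<Longrightarrow> P c' = P c \<Longrightarrow>
   size (filter_mset P (add_mset c' (cs - {#c#}))) = size (filter_mset P cs)"
proof -
  assume c: "c \<in># cs" and p: "P c' = P c"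
  obtain r where r: "cs = add_mset c r" using c by (metis insert_DiffM)
  then have "cs - {#c#} = r" by simp
  then show ?thesis using r p by (cases "P c") auto
qed

lemma Wp_leaf: "Wp t z (leaf M) = 1"
  unfolding Wp_def by (simp add: ipl_def pel_def pe_Nd beta_def)

lemma labs_sub_lt: "\<forall>a\<in>#labs (Nd l cs). a < M \<Longrightarrow> c \<in># cs \<Longrightarrow> \<forall>a\<in>#labs c. a < M"
  using labs_kid_sub by (meson mset_subset_eqD)

lemma node_sum: "good s \<Longrightarrow> \<forall>a\<in>#labs s. a < M \<Longrightarrow> NS M t z s"
proof (induction s)
  case (Nd l cs)
  let ?s = "Nd l cs"
  have g: "\<forall>c\<in>#cs. good c" and l2: "l = None \<longrightarrow> 2 \<le> size cs" using Nd.prems by (auto simp: good_Nd)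
  have ltk: "\<forall>c\<in>#cs. \<forall>a\<in>#labs c. a < M" using labs_sub_lt Nd.prems(2) by blast
  have IH: "\<forall>c\<in>#cs. NS M t z c" using Nd.IH g ltk by blast
  have nes: "labs ?s \<noteq> {#}" using good_ne[OF Nd.prems(1)] .
  have bsM: "beta ?s < M" using beta_mem[OF nes] Nd.prems(2) by blast
  have lM: "l \<noteq> Some M" using Nd.prems(2) by auto
  let ?loc = "monom (t ^ ipl l (beta ?s) * z ^ pel l cs) (if l = None then 1 else 0)"
  have Ws: "Wp t z ?s = ?loc * PP t z cs" by (rule Wp_Nd)
  have inn: "Wp t z (Nd l cs') = ?loc * PP t z cs'" if cs': "cs' \<in># innerK M cs" for cs'
  proof -
    obtain c c' where c: "c \<in># cs" "c' \<in># insN M c" "cs' = add_mset c' (cs - {#c#})"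
      using cs' unfolding innerK_def by (auto simp: mem_sum_image)
    have "cs' \<in># insK M cs" using cs' unfolding insK_inner by simp
    then have "labs (Nd l cs') = add_mset M (labs ?s)" using labs_insK by (cases l) auto
    then have b: "beta (Nd l cs') = beta ?s" using beta_add nes Nd.prems(2) by blast
    have "beta c' = beta c" using beta_ins c g ltk by blast
    then have "pel l cs' = pel l cs"
    proof (cases l)
      case (Some a)
      have "size (filter_mset (\<lambda>d. a < beta d) cs') = size (filter_mset (\<lambda>d. a < beta d) cs)"
        unfolding c(3) by (rule filter_replace[OF c(1)]) (simp add: \<open>beta c' = beta c\<close>)
      then show ?thesis using Some unfolding pel_def by simp
    qed (simp add: pel_def)
    then show ?thesis using Wp_Nd[of t z l cs'] b by simp
  qed
  have S_inner: "sum_mset (image_mset (\<lambda>cs'. Wp t z (Nd l cs')) (innerK M cs))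
      = ?loc * (PP t z cs * sum_mset (image_mset (AP t z) cs) + smult t (pderiv (PP t z cs)))"
  proof -
    have "image_mset (\<lambda>cs'. Wp t z (Nd l cs')) (innerK M cs) = image_mset (\<lambda>cs'. ?loc * PP t z cs') (innerK M cs)"
      using inn by (rule image_mset_cong)
    then have "sum_mset (image_mset (\<lambda>cs'. Wp t z (Nd l cs')) (innerK M cs)) = sum_mset (image_mset (\<lambda>cs'. ?loc * PP t z cs') (innerK M cs))"
      by (rule arg_cong)
    also have "\<dots> = ?loc * sum_mset (image_mset (PP t z) (innerK M cs))"
      by (rule sum_mset_distrib_left[symmetric])
    also have "\<dots> = ?loc * (PP t z cs * sum_mset (image_mset (AP t z) cs) + smult t (pderiv (PP t z cs)))"
      by (simp only: forest_sum[OF IH])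
    finally show ?thesis .
  qed
  have Wleaf: "Wp t z (Nd l (add_mset (leaf M) cs)) =
     monom (t ^ ipl l (beta ?s) * z ^ (pel l cs + (if l = None then 0 else 1))) (if l = None then 1 else 0) * PP t z cs"
  proof -
    have "labs (Nd l (add_mset (leaf M) cs)) = add_mset M (labs ?s)" by (cases l) auto
    then have b: "beta (Nd l (add_mset (leaf M) cs)) = beta ?s" using beta_add nes Nd.prems(2) by blast
    have p: "pel l (add_mset (leaf M) cs) = pel l cs + (if l = None then 0 else 1)"
    proof (cases l)
      case (Some a)
      then have "a < M" using Nd.prems(2) by simp
      moreover have "beta (leaf M) = M" unfolding beta_def by simp
      ultimately show ?thesis using Some unfolding pel_def by simp
    qed (simp add: pel_def)
    have "PP t z (add_mset (leaf M) cs) = PP t z cs" unfolding PP_def by (simp add: Wp_leaf)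
    then show ?thesis using Wp_Nd[of t z l "add_mset (leaf M) cs"] b p by simp
  qed
  have WB: "Wp t z (Nd (Some M) {#?s#}) = smult t (Wp t z ?s)"
  proof -
    have "labs (Nd (Some M) {#?s#}) = add_mset M (labs ?s)" by simp
    then have b: "beta (Nd (Some M) {#?s#}) = beta ?s" using beta_add nes Nd.prems(2) by blast
    have "ip (Nd (Some M) {#?s#}) = 1 + ip ?s" using b bsM by (simp add: ipl_def)
    moreover have "pe (Nd (Some M) {#?s#}) = pe ?s" using bsM by (simp add: pe_Nd pel_def)
    moreover have "un (Nd (Some M) {#?s#}) = un ?s" by simp
    ultimately show ?thesis unfolding Wp_def by (simp add: smult_monom)
  qed
  have WC: "Wp t z (Nd None {#?s, leaf M#}) = Wp t z ?s * monom 1 1"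
  proof -
    have "ip (Nd None {#?s, leaf M#}) = ip ?s" by (simp add: ipl_def beta_def)
    moreover have "pe (Nd None {#?s, leaf M#}) = pe ?s" by (simp add: pe_Nd pel_def)
    moreover have "un (Nd None {#?s, leaf M#}) = un ?s + 1" by simp
    ultimately show ?thesis unfolding Wp_def by (simp add: mult_monom)
  qed
  have WD: "l = None \<Longrightarrow> Wp t z (Nd (Some M) cs) = smult t (PP t z cs)"
  proof -
    assume ln: "l = None"
    have "labs (Nd (Some M) cs) = add_mset M (labs ?s)" using ln by simp
    then have b: "beta (Nd (Some M) cs) = beta ?s" using beta_add nes Nd.prems(2) by blast
    have "\<forall>c\<in>#cs. beta c < M" using ltk g good_ne beta_mem by blast
    then have "pel (Some M) cs = 0" unfolding pel_def by (auto simp: filter_mset_eq_mempty_iff)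
    then have "Wp t z (Nd (Some M) cs) = monom (t ^ 1 * z ^ 0) 0 * PP t z cs"
      using Wp_Nd[of t z "Some M" cs] b bsM by (simp add: ipl_def)
    then show ?thesis by (simp add: monom_0)
  qed
  have total: "sum_mset (image_mset (Wp t z) (insN M ?s)) = smult t (Wp t z ?s) + Wp t z ?s * monom 1 1
     + (if l = None then smult t (PP t z cs) else 0) + Wp t z (Nd l (add_mset (leaf M) cs))
     + sum_mset (image_mset (\<lambda>cs'. Wp t z (Nd l cs')) (innerK M cs))"
    unfolding insN_Nd insK_inner using WB WC WD by (simp add: image_mset.compositionality o_def)
  have nls: "nl ?s = (if l = None then 0 else 1) + sum_mset (image_mset nl cs)" by simp
  have uns: "un ?s = (if l = None then 1 else 0) + sum_mset (image_mset un cs)" by simp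
  have Es: "nl ?s + un ?s = 1 + sum_mset (image_mset (\<lambda>c. nl c + un c) cs)"
    using nls uns by (simp add: sum_mset.distrib)
  show ?case
  proof (cases l)
    case None
    have loc: "?loc = monom 1 1" using None by (simp add: ipl_def pel_def)
    have cAs: "cA t z ?s = 1 + t + sum_mset (image_mset (cA t z) cs)"
      unfolding sum_cA unfolding cA_def using None nls uns Es by (simp add: algebra_simps)
    have "sum_mset (image_mset (Wp t z) (insN M ?s)) =
       smult t (monom 1 1 * PP t z cs) + monom 1 1 * PP t z cs * monom 1 1 + smult t (PP t z cs)
       + monom 1 1 * PP t z cs + monom 1 1 * (PP t z cs * sum_mset (image_mset (AP t z) cs) + smult t (pderiv (PP t z cs)))"
      using total Ws Wleaf S_inner loc None by simp
    moreover have "Wp t z ?s * AP t z ?s + smult t (pderiv (Wp t z ?s)) =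
       monom 1 1 * PP t z cs * [: 1 + t + sum_mset (image_mset (cA t z) cs), 1 + of_nat (sum_mset (image_mset (\<lambda>c. nl c + un c) cs)) :]
       + smult t (PP t z cs + monom 1 1 * pderiv (PP t z cs))"
      using Ws loc cAs Es unfolding AP_def by (simp add: pderiv_mult pderiv_monom add.commute)
    moreover have "monom (1::real) 1 = [:0, 1:]" by (simp add: monom_altdef)
    ultimately show ?thesis unfolding NS_def sum_AP by (simp add: smult_add_left smult_add_right smult_pCons add_ac)
  next
    case (Some a)
    let ?k = "t ^ ipl l (beta ?s) * z ^ pel l cs"
    have loc: "?loc = [: ?k :]" using Some by (simp add: monom_0)
    have cAs: "cA t z ?s = z + t + sum_mset (image_mset (cA t z) cs)"
      unfolding sum_cA unfolding cA_def using Some nls uns Es by (simp add: algebra_simps)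
    have E1: "sum_mset (image_mset (Wp t z) (insN M ?s)) =
       smult t (smult ?k (PP t z cs)) + smult ?k (PP t z cs) * monom 1 1
       + smult (?k * z) (PP t z cs) + smult ?k (PP t z cs * sum_mset (image_mset (AP t z) cs) + smult t (pderiv (PP t z cs)))"
      using total Ws Wleaf S_inner loc Some by (simp add: monom_0 power_add mult_ac)
    have E2: "Wp t z ?s * AP t z ?s + smult t (pderiv (Wp t z ?s)) =
       smult ?k (PP t z cs) * [: z + t + sum_mset (image_mset (cA t z) cs), 1 + of_nat (sum_mset (image_mset (\<lambda>c. nl c + un c) cs)) :]
       + smult t (smult ?k (pderiv (PP t z cs)))"
      using Ws loc cAs Es unfolding AP_def by (simp add: pderiv_smult)
    have X: "monom (1::real) 1 = [:0, 1:]" by (simp add: monom_altdef)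
    show ?thesis unfolding NS_def E1 E2 X sum_AP by (simp add: poly_eq_iff coeff_pCons algebra_simps split: nat.split)
  qed
qed




definition insT :: "nat \<Rightarrow> tree \<Rightarrow> tree multiset" where
  "insT M T = image_mset (Nd (lab T)) (insK M (kids T))"

definition delT :: "nat \<Rightarrow> tree \<Rightarrow> tree" where
  "delT M T = Nd (lab T) (sum_mset (image_mset (dl M) (kids T)))"

lemma greg_alt: "greg m T \<longleftrightarrow> lab T = Some 1 \<and> labs T = mset_set {1..m} \<and> good T"
  unfolding greg_def good_def ..

lemma good_nodes: "good s \<Longrightarrow> v \<in># nodes s \<Longrightarrow> good v"
proof (induction s)
  case (Nd l cs)
  show ?case
  proof (cases "v = Nd l cs")
    case False
    then obtain c where "c \<in># cs" "v \<in># nodes c" using Nd.prems(2) by (auto simp: mem_sum_image)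
    then show ?thesis using Nd.IH Nd.prems(1) by (auto simp: good_Nd)
  qed (use Nd.prems in simp)
qed

lemma greg_gl: "greg m T \<Longrightarrow> gl T"
  unfolding gl_def greg_alt
  using good_nodes good_ne by (auto simp: count_mset_set')

lemma mset_set_Suc: "mset_set {1..Suc k} = add_mset (Suc k) (mset_set {1..k})"
proof -
  have "{1..Suc k} = insert (Suc k) {1..k}" by auto
  then show ?thesis by simp
qed

lemma mset_set_Suc': "mset_set {Suc 0..Suc k} = add_mset (Suc k) (mset_set {Suc 0..k})"
  using mset_set_Suc by simp

lemma labs_lt: "labs S = mset_set {1..k} \<Longrightarrow> \<forall>a\<in>#labs S. a < Suc k"
  by simp

lemma F1: assumes "greg k S" "T \<in># insT (Suc k) S" shows "greg (Suc k) T"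
proof -
  obtain cs where S: "S = Nd (Some 1) cs" using assms(1) unfolding greg_alt by (cases S) auto
  obtain cs' where T: "T = Nd (Some 1) cs'" "cs' \<in># insK (Suc k) cs" using assms(2) S unfolding insT_def by auto
  have g: "\<forall>c\<in>#cs. good c" using assms(1) S unfolding greg_alt by (simp add: good_Nd)
  have h: "\<forall>c\<in>#cs. \<forall>c'\<in>#insN (Suc k) c. good c'" using good_ins g by blast
  have gT: "good T" using good_insK[OF g T(2) h] T(1) by (simp add: good_Nd)
  have "labs T = add_mset (Suc k) (labs S)" using labs_insK[OF T(2)] T S by simp
  then have "labs T = mset_set {1..Suc k}" using assms(1) unfolding greg_alt by (simp add: mset_set_Suc')
  then show ?thesis using gT T unfolding greg_alt by simp
qed

lemma S_kids: assumes "greg k S" "S = Nd l cs" shows "\<forall>c\<in>#cs. good c \<and> Suc k \<notin># labs c"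
proof -
  have g: "\<forall>c\<in>#cs. good c" using assms unfolding greg_alt by (simp add: good_Nd)
  have "Suc k \<notin># labs S" using assms(1) unfolding greg_alt by simp
  then show ?thesis using g kids_free assms(2) by blast
qed

lemma F2: assumes "greg k S" "T \<in># insT (Suc k) S" shows "delT (Suc k) T = S"
proof -
  obtain cs where S: "S = Nd (Some 1) cs" using assms(1) unfolding greg_alt by (cases S) auto
  obtain cs' where T: "T = Nd (Some 1) cs'" "cs' \<in># insK (Suc k) cs" using assms(2) S unfolding insT_def by auto
  show ?thesis using dl_insK[OF S_kids[OF assms(1) S] T(2)] T S unfolding delT_def by simp
qed

lemma F3: assumes "greg (Suc k) T" "1 \<le> k" shows "greg k (delT (Suc k) T) \<and> T \<in># insT (Suc k) (delT (Suc k) T)"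
proof -
  let ?M = "Suc k"
  obtain cs where T: "T = Nd (Some 1) cs" using assms(1) unfolding greg_alt by (cases T) auto
  have g: "\<forall>c\<in>#cs. good c" using assms(1) T unfolding greg_alt by (simp add: good_Nd)
  have lT: "labs T = mset_set {1..?M}" using assms(1) unfolding greg_alt by simp
  have "count (labs T) ?M = 1" using lT by simp
  then have one: "count (sum_mset (image_mset labs cs)) ?M = 1" using T assms(2) by simp
  have IH: "\<forall>c\<in>#cs. count (labs c) ?M = 1 \<longrightarrow> RV ?M c" using node_rev g by blast
  let ?cs' = "sum_mset (image_mset (dl ?M) cs)"
  have F: "cs \<in># insK ?M ?cs'" "\<forall>c\<in>#?cs'. good c \<and> ?M \<notin># labs c"
    using forest_rev[OF g one IH] by blast+
  have D: "delT ?M T = Nd (Some 1) ?cs'" unfolding delT_def T by simp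
  have "labs T = add_mset ?M (labs (delT ?M T))" using labs_insK[OF F(1)] D T by simp
  then have "labs (delT ?M T) = mset_set {1..k}" using lT mset_set_Suc' by simp
  moreover have "good (delT ?M T)" using F(2) D by (simp add: good_Nd)
  moreover have "T \<in># insT ?M (delT ?M T)" using F(1) D T unfolding insT_def by simp
  ultimately show ?thesis using D unfolding greg_alt by simp
qed

lemma F4: assumes "greg k S" shows "distm (insT (Suc k) S)"
proof -
  obtain cs where S: "S = Nd (Some 1) cs" using assms(1) unfolding greg_alt by (cases S) auto
  have gS: "gl S" using greg_gl[OF assms] .
  have kk: "\<forall>c\<in>#cs. good c \<and> Suc k \<notin># labs c" using S_kids[OF assms S] .
  have kc: "\<forall>c\<in>#cs. distm (insN (Suc k) c) \<and> (\<forall>c'\<in>#insN (Suc k) c. c' \<noteq> c)"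
    using kk dist_insN gl_kid gS S ins_ne by blast
  have "distm (insK (Suc k) cs)" using dist_insK[OF gl_dist_kids kc] gS S by simp
  then show ?thesis unfolding insT_def S by (intro dist_image) auto
qed

lemma G_step: assumes "1 \<le> k"
  shows "{T. greg (Suc k) T} = (\<Union>S\<in>{S. greg k S}. set_mset (insT (Suc k) S))"
  using F1 F3[OF _ assms] by blast

lemma G_disj: "greg k S1 \<Longrightarrow> greg k S2 \<Longrightarrow> S1 \<noteq> S2 \<Longrightarrow>
   set_mset (insT (Suc k) S1) \<inter> set_mset (insT (Suc k) S2) = {}"
  using F2 by blast

lemma G1: "{T. greg 1 T} = {Nd (Some 1) {#}}"
proof -
  have "greg 1 T \<longleftrightarrow> T = Nd (Some 1) {#}" for T
  proof
    assume a: "greg 1 T"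
    obtain cs where T: "T = Nd (Some 1) cs" using a unfolding greg_alt by (cases T) auto
    have g: "\<forall>c\<in>#cs. good c" using a T unfolding greg_alt by (simp add: good_Nd)
    have "labs T = {#1#}" using a unfolding greg_alt by simp
    then have "sum_mset (image_mset labs cs) = {#}" using T by simp
    then have "\<forall>c\<in>#cs. labs c = {#}" by (auto simp: sum_mset_0_iff)
    then have "cs = {#}" using g good_ne by (metis multiset_nonemptyE)
    then show "T = Nd (Some 1) {#}" using T by simp
  next
    assume "T = Nd (Some 1) {#}"
    then show "greg 1 T" unfolding greg_alt by (simp add: good_Nd)
  qed
  then show ?thesis by blast
qed

lemma G_finite: "1 \<le> k \<Longrightarrow> finite {T. greg k T}"
proof (induction k rule: dec_induct)
  case base then show ?case using G1 by simp
next
  case (step k) then show ?case using G_step[OF step(1)] by simp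
qed

lemma dist_sum: "distm A \<Longrightarrow> sum_mset (image_mset f A) = sum f (set_mset A)"
proof -
  assume d: "distm A"
  have "mset_set (set_mset A) = A"
  proof (rule multiset_eqI)
    fix x show "count (mset_set (set_mset A)) x = count A x"
      using d unfolding distm_def by (cases "x \<in># A") (auto simp: count_mset_set' count_eq_zero_iff le_antisym Suc_le_eq)
  qed
  then show ?thesis by (metis sum_unfold_sum_mset)
qed

lemma G_sum: assumes "1 \<le> k"
  shows "sum f {T. greg (Suc k) T} = sum (\<lambda>S. sum_mset (image_mset f (insT (Suc k) S))) {T. greg k T}"
proof -
  have "sum f {T. greg (Suc k) T} = sum (\<lambda>S. sum f (set_mset (insT (Suc k) S))) {T. greg k T}"
    unfolding G_step[OF assms] using G_finite[OF assms] G_disj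
    by (intro sum.UNION_disjoint) auto
  also have "\<dots> = sum (\<lambda>S. sum_mset (image_mset f (insT (Suc k) S))) {T. greg k T}"
    by (rule sum.cong[OF refl]) (metis (mono_tags) mem_Collect_eq dist_sum F4)
  finally show ?thesis .
qed




definition Pw :: "real \<Rightarrow> real \<Rightarrow> real \<Rightarrow> tree \<Rightarrow> real poly" where
  "Pw x t z T = smult (x ^ (size (kids T) - 1)) (PP t z (kids T))"

lemma pderiv_sum_set: "pderiv (sum f A) = sum (\<lambda>a. pderiv (f a)) A"
  by (induction A rule: infinite_finite_induct) (auto simp: pderiv_add)

lemma size_sum_img: "size (sum_mset (image_mset (f :: 'a \<Rightarrow> 'b multiset) A)) = sum_mset (image_mset (\<lambda>a. size (f a)) A)"
  by (induction A) auto

lemma nl_labs: "nl s = size (labs s)"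
proof (induction s)
  case (Nd l cs)
  have "image_mset nl cs = image_mset (\<lambda>c. size (labs c)) cs" using Nd.IH by (intro image_mset_cong) blast
  then show ?case by (cases l) (auto simp: size_sum_img image_mset.compositionality o_def)
qed

lemma size_inner: "cs' \<in># innerK M cs \<Longrightarrow> size cs' = size cs"
  unfolding innerK_def by (auto simp: mem_sum_image) (metis insert_DiffM size_add_mset)

lemma top_sum:
  assumes "greg k S" "2 \<le> k"
  shows "sum_mset (image_mset (Pw x t z) (insT (Suc k) S)) = Pw x t z S * [: x + sum_mset (image_mset (cA t z) (kids S)),
     of_nat (sum_mset (image_mset (\<lambda>c. nl c + un c) (kids S))) :] + smult t (pderiv (Pw x t z S))"
proof -
  obtain cs where S: "S = Nd (Some 1) cs" using assms(1) unfolding greg_alt by (cases S) auto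
  have lS: "labs S = mset_set {1..k}" using assms(1) unfolding greg_alt by simp
  have g: "\<forall>c\<in>#cs. good c" using assms(1) S unfolding greg_alt by (simp add: good_Nd)
  have "\<forall>a\<in>#labs (Nd (Some 1) cs). a < Suc k" using lS S by (simp del: labs.simps)
  then have lt: "\<forall>c\<in>#cs. \<forall>a\<in>#labs c. a < Suc k" using labs_sub_lt by blast
  have NS: "\<forall>c\<in>#cs. NS (Suc k) t z c" using node_sum g lt by blast
  have "2 \<in># labs S" using lS assms(2) by simp
  then have "cs \<noteq> {#}" using S by auto
  then have d: "size cs \<ge> 1" by (simp add: Suc_le_eq nonempty_has_size)
  let ?d = "size cs - 1"
  have xd: "x ^ size cs = x * x ^ ?d" using d by (metis Suc_diff_le diff_Suc_1 power_Suc)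
  have leafP: "Pw x t z (Nd (Some 1) (add_mset (leaf (Suc k)) cs)) = smult x (smult (x ^ ?d) (PP t z cs))"
    unfolding Pw_def PP_def using xd by (simp add: Wp_leaf)
  have innP: "Pw x t z (Nd (Some 1) cs') = smult (x ^ ?d) (PP t z cs')" if "cs' \<in># innerK (Suc k) cs" for cs'
    unfolding Pw_def using size_inner[OF that] by simp
  have "sum_mset (image_mset (\<lambda>cs'. Pw x t z (Nd (Some 1) cs')) (innerK (Suc k) cs))
     = sum_mset (image_mset (\<lambda>cs'. smult (x ^ ?d) (PP t z cs')) (innerK (Suc k) cs))"
    using innP by (metis (no_types, lifting) image_mset_cong)
  also have "\<dots> = smult (x ^ ?d) (sum_mset (image_mset (PP t z) (innerK (Suc k) cs)))"
    by (simp add: smult_sum_mset)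
  also have "\<dots> = smult (x ^ ?d) (PP t z cs * sum_mset (image_mset (AP t z) cs) + smult t (pderiv (PP t z cs)))"
    using forest_sum[OF NS] by simp
  finally have SI: "sum_mset (image_mset (\<lambda>cs'. Pw x t z (Nd (Some 1) cs')) (innerK (Suc k) cs))
     = smult (x ^ ?d) (PP t z cs * sum_mset (image_mset (AP t z) cs) + smult t (pderiv (PP t z cs)))" .
  have E1: "sum_mset (image_mset (Pw x t z) (insT (Suc k) S)) = smult x (smult (x ^ ?d) (PP t z cs))
     + smult (x ^ ?d) (PP t z cs * sum_mset (image_mset (AP t z) cs) + smult t (pderiv (PP t z cs)))"
    unfolding insT_def S insK_inner using leafP SI by (simp add: image_mset.compositionality o_def)
  have E2: "Pw x t z S = smult (x ^ ?d) (PP t z cs)" unfolding Pw_def S by simp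
  show ?thesis unfolding E1 E2 sum_AP using S
    by (simp add: poly_eq_iff coeff_pCons algebra_simps pderiv_smult split: nat.split)
qed

lemma mono_id: "[:t::real, 1 + t, 1:] * pderiv (monom c U) = smult t (pderiv (monom c U))
   + monom c U * [: of_nat U * (1 + t), of_nat U :]"
proof -
  have "poly ([:t, 1 + t, 1:] * pderiv (monom c U)) y = poly (smult t (pderiv (monom c U))
   + monom c U * [: of_nat U * (1 + t), of_nat U :]) y" for y :: real
  proof (cases U)
    case 0 then show ?thesis by (simp add: pderiv_monom)
  next
    case (Suc k) then show ?thesis by (simp add: pderiv_monom poly_monom algebra_simps)
  qed
  then show ?thesis using poly_eq_poly_eq_iff by blast
qed

lemma Pw_monom: "Pw x t z S = monom (x ^ (size (kids S) - 1) * (t ^ sum_mset (image_mset ip (kids S))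
   * z ^ sum_mset (image_mset pe (kids S)))) (sum_mset (image_mset un (kids S)))"
  unfolding Pw_def PP_monom by (simp add: smult_monom)

lemma top_rec: assumes "greg (Suc n) S" "1 \<le> n"
  shows "sum_mset (image_mset (Pw x t z) (insT (Suc (Suc n)) S)) =
    Pw x t z S * [: x + of_nat n * z + of_nat n * t, of_nat n :] + [:t, 1 + t, 1:] * pderiv (Pw x t z S)"
proof -
  obtain cs where S: "S = Nd (Some 1) cs" using assms(1) unfolding greg_alt by (cases S) auto
  have "nl S = Suc n" using assms(1) unfolding nl_labs greg_alt by simp
  then have nn: "sum_mset (image_mset nl cs) = n" using S by simp
  let ?U = "sum_mset (image_mset un cs)"
  have E: "sum_mset (image_mset (\<lambda>c. nl c + un c) cs) = n + ?U" using nn by (simp add: sum_mset.distrib)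
  have T: "sum_mset (image_mset (Pw x t z) (insT (Suc (Suc n)) S)) = Pw x t z S * [: x + (of_nat n * z + of_nat ?U + of_nat (n + ?U) * t),
     of_nat (n + ?U) :] + smult t (pderiv (Pw x t z S))"
    using top_sum[OF assms(1)] assms(2) S nn E by (simp add: sum_cA)
  have M: "[:t, 1 + t, 1:] * pderiv (Pw x t z S) = smult t (pderiv (Pw x t z S)) + Pw x t z S * [: of_nat ?U * (1 + t), of_nat ?U :]"
    unfolding Pw_monom S using mono_id by simp
  have C: "[: x + (of_nat n * z + of_nat ?U + of_nat (n + ?U) * t), of_nat (n + ?U) :]
     = [: x + of_nat n * z + of_nat n * t, of_nat n :] + [: of_nat ?U * (1 + t), of_nat ?U :]"
    by (simp add: algebra_simps)
  show ?thesis unfolding T M C by (simp only: distrib_left add_ac)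
qed

definition FF :: "real \<Rightarrow> real \<Rightarrow> real \<Rightarrow> nat \<Rightarrow> real poly" where
  "FF x t z n = sum (Pw x t z) {T. greg (Suc n) T}"

lemma FF_rec: assumes "1 \<le> n"
  shows "FF x t z (Suc n) = FF x t z n * [: x + of_nat n * z + of_nat n * t, of_nat n :] + [:t, 1 + t, 1:] * pderiv (FF x t z n)"
proof -
  have "FF x t z (Suc n) = sum (\<lambda>S. sum_mset (image_mset (Pw x t z) (insT (Suc (Suc n)) S))) {T. greg (Suc n) T}"
    unfolding FF_def by (rule G_sum) simp
  also have "\<dots> = sum (\<lambda>S. Pw x t z S * [: x + of_nat n * z + of_nat n * t, of_nat n :] + [:t, 1 + t, 1:] * pderiv (Pw x t z S)) {T. greg (Suc n) T}"
    using top_rec assms by (intro sum.cong) auto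
  also have "\<dots> = FF x t z n * [: x + of_nat n * z + of_nat n * t, of_nat n :] + [:t, 1 + t, 1:] * pderiv (FF x t z n)"
    unfolding FF_def by (simp only: sum.distrib sum_distrib_left sum_distrib_right pderiv_sum_set)
  finally show ?thesis .
qed

lemma FF_1: "FF x t z 1 = 1"
proof -
  have "{T. greg 2 T} = set_mset (insT 2 (Nd (Some 1) {#}))"
    using G_step[of 1] G1 by (simp add: numeral_2_eq_2)
  also have "insT 2 (Nd (Some 1) {#}) = {#Nd (Some 1) {#leaf 2#}#}"
    unfolding insT_def insK_inner innerK_def by simp
  finally have "{T. greg 2 T} = {Nd (Some 1) {#leaf 2#}}" by simp
  then show ?thesis unfolding FF_def Pw_def PP_def by (simp add: Wp_leaf numeral_2_eq_2)
qed

lemma unl_un: "unl s = un s"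
proof (induction s)
  case (Nd l cs)
  have "image_mset unl cs = image_mset un cs" using Nd.IH by (intro image_mset_cong) blast
  then show ?case unfolding unl_def by (simp add: size_filter_sum)
qed

lemma impp_ip: "impp s = ip s"
proof (induction s)
  case (Nd l cs)
  have "image_mset impp cs = image_mset ip cs" using Nd.IH by (intro image_mset_cong) blast
  then show ?case unfolding impp_def by (cases l) (simp_all add: size_filter_sum ipl_def)
qed

lemma eval_Pw: assumes "greg (Suc n) T" "1 \<le> n"
  shows "poly (Pw x t z T) y = y ^ unl T * t ^ impp T * x powi (int (deg_root T) - 1)
        * z powi (int (lead T) - int (deg_root T) - 1)"
proof -
  obtain cs where T: "T = Nd (Some 1) cs" using assms(1) unfolding greg_alt by (cases T) auto
  have lT: "labs T = mset_set {1..Suc n}" using assms(1) unfolding greg_alt by simp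
  have "2 \<in># labs T" using lT assms(2) by simp
  then have "cs \<noteq> {#}" using T by auto
  then have d: "size cs \<ge> 1" by (simp add: Suc_le_eq nonempty_has_size)
  have c1: "count (labs T) 1 = 1" using lT by simp
  then have c0: "count (sum_mset (image_mset labs cs)) 1 = 0" using T by simp
  have bT: "beta T = 1"
  proof -
    have o: "1 \<in># labs T" using lT by simp
    then have "beta T \<le> 1" by (rule beta_le)
    moreover have "labs T \<noteq> {#}" using o by auto
    then have "beta T \<in># labs T" by (rule beta_mem)
    then have "beta T \<ge> 1" using lT by simp
    ultimately show ?thesis by simp
  qed
  have bc: "1 < beta c" if c: "c \<in># cs" for c
  proof -
    have ne: "labs c \<noteq> {#}" using good_ne assms(1) c T unfolding greg_alt by (simp add: good_Nd)
    have m: "beta c \<in># labs c" using beta_mem[OF ne] .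
    then have "beta c \<in># labs T" using labs_kid_sub[OF c] T by (metis mset_subset_eqD)
    then have "beta c \<ge> 1" using lT by simp
    moreover have "beta c \<noteq> 1"
    proof
      assume "beta c = 1"
      then have "1 \<in># sum_mset (image_mset labs cs)" using m c by (auto simp: mem_sum_image)
      then show False using c0 by (simp add: count_eq_zero_iff)
    qed
    ultimately show ?thesis by simp
  qed
  have un: "unl T = sum_mset (image_mset un cs)" unfolding unl_un T by simp
  have ip: "impp T = sum_mset (image_mset ip cs)" unfolding impp_ip using T bT by (simp add: ipl_def)
  have "filter_mset (\<lambda>c. 1 < beta c) cs = filter_mset (\<lambda>c. True) cs"
    using bc by (intro filter_mset_cong) auto
  then have pelT: "pel (Some 1) cs = size cs" unfolding pel_def by simp
  have ld: "lead T = size cs + sum_mset (image_mset pe cs) + 1"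
    using lead_pe[OF greg_gl[OF assms(1)]] T pelT by (simp add: pe_Nd)
  have dg: "deg_root T = size cs" unfolding deg_root_def T by simp
  have e1: "x powi (int (deg_root T) - 1) = x ^ (size cs - 1)"
    using d dg by (metis of_nat_1 of_nat_diff power_int_of_nat)
  have e2: "z powi (int (lead T) - int (deg_root T) - 1) = z ^ sum_mset (image_mset pe cs)"
  proof -
    have "int (lead T) - int (deg_root T) - 1 = int (sum_mset (image_mset pe cs))" using ld dg by linarith
    then show ?thesis by (simp only: power_int_of_nat)
  qed
  show ?thesis unfolding e1 e2 un ip unfolding Pw_monom T by (simp add: poly_monom)
qed

lemma deriv_shift: "deriv (\<lambda>w. poly P (w - 1)) (y + 1) = poly (pderiv P) (y :: real)"
proof -
  have "DERIV (\<lambda>w. poly P (w - 1)) (y + 1) :> poly (pderiv P) (y + 1 - 1) * 1"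
    by (rule DERIV_chain2[OF poly_DERIV]) (auto intro!: derivative_eq_intros)
  then show ?thesis by (simp add: DERIV_imp_deriv)
qed

lemma Q_FF: "1 \<le> n \<Longrightarrow> \<forall>y. Q n x (y + 1) z (t - 1) = poly (FF x t z n) y"
proof (induction n rule: dec_induct)
  case base then show ?case using FF_1 by simp
next
  case (step n)
  then obtain m where m: "n = Suc m" by (cases n) auto
  have fn_eq: "(\<lambda>w. Q n x w z (t - 1)) = (\<lambda>w. poly (FF x t z n) (w - 1))"
  proof
    fix w have "Q n x ((w - 1) + 1) z (t - 1) = poly (FF x t z n) (w - 1)" using step.IH by blast
    then show "Q n x w z (t - 1) = poly (FF x t z n) (w - 1)" by simp
  qed
  show ?case
  proof
    fix y :: real
    have "Q (Suc n) x (y + 1) z (t - 1) = (x + real n * z + (y + 1 + (t - 1)) * real n) * Q n x (y + 1) z (t - 1)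
       + (y + 1 + (t - 1)) * ((y + 1) * deriv (\<lambda>w. Q n x w z (t - 1)) (y + 1))"
      using m by simp
    also have "\<dots> = (x + real n * z + (y + t) * real n) * poly (FF x t z n) y
       + (y + t) * ((y + 1) * poly (pderiv (FF x t z n)) y)"
      using step.IH unfolding fn_eq deriv_shift by simp
    also have "\<dots> = poly (FF x t z (Suc n)) y"
      unfolding FF_rec[OF step(1)] by (simp add: algebra_simps power2_eq_square)
    finally show "Q (Suc n) x (y + 1) z (t - 1) = poly (FF x t z (Suc n)) y" .
  qed
qed

theorem theorem12:
  fixes n :: nat and x y z t :: real
  assumes "n \<ge> 1"
  shows "R n x y z t =
    (\<Sum>T\<in>{T. greg (n + 1) T}.
        y ^ unl T * t ^ impp T * x powi (int (deg_root T) - 1)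
        * z powi (int (lead T) - int (deg_root T) - 1))"
proof -
  have "R n x y z t = poly (FF x t z n) y" unfolding R_def using Q_FF[OF assms] by simp
  also have "\<dots> = (\<Sum>T\<in>{T. greg (Suc n) T}. poly (Pw x t z T) y)" unfolding FF_def by (simp add: poly_sum)
  also have "\<dots> = (\<Sum>T\<in>{T. greg (n + 1) T}.
        y ^ unl T * t ^ impp T * x powi (int (deg_root T) - 1)
        * z powi (int (lead T) - int (deg_root T) - 1))"
    using eval_Pw assms by (intro sum.cong) auto
  finally show ?thesis .
qed


end
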